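(* For $k\in(0,\infty)$ let $\mathcal{T}_{(k)}$ be the Weibull law with tail function $\overline{F}_{(k)}(x)=e^{-x^k}$, $x\in[0,\infty)$. Each of the following statements is equivalent to $k\leq1$: (a) $\mathcal{T}_{(k)}^{\mathcal{R}}\leq_{\mathrm{st}}\mathcal{T}_{(k)}$ for all reset laws $\mathcal{R}$; (b) $\mathcal{T}_{(k)}^{\delta_r}\leq_{\mathrm{st}}\mathcal{T}_{(k)}$ for all $r\in(0,\infty)$; (c) $\mathcal{T}_{(k)}^{\mathrm{Exp}(\mu)}\leq_{\mathrm{st}}\mathcal{T}_{(k)}$ for all $\mu\in(0,\infty)$; (d) $\mathcal{T}_{(k)}^{\mathcal{R}}[\mathrm{id}]\leq\mathcal{T}_{(k)}[\mathrm{id}]$ for all reset laws $\mathcal{R}$; (e) $\mathcal{T}_{(k)}^{\delta_r}[\mathrm{id}]\leq\mathcal{T}_{(k)}[\mathrm{id}]$ for all $r\in(0,\infty)$; (f) $\mathcal{T}_{(k)}^{\mathrm{Exp}(\mu)}[\mathrm{id}]\leq\mathcal{T}_{(k)}[\mathrm{id}]$ for all $\mu\in(0,\infty)$; (g) $\Gamma(1+2/k)\geq2\Gamma(1+1/k)^2$. Likewise, each of (a)–(f) with $\leq_{\mathrm{st}}$, $\leq$ replaced by $\geq_{\mathrm{st}}$, $\geq$ is equivalent to $k\geq1$, and each of (a)–(f) with $\leq_{\mathrm{st}}$, $\leq$ replaced by equality is equivalent to $k=1$.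
   Context: $\mathcal{Q}[\mathrm{id}]:=\int t\,\mathcal{Q}(\mathrm{d}t)$. A reset law is a probability law $\mathcal{R}$ on the Borel sets of $[0,\infty]$ with $\mathcal{R}((0,\infty])>0$ and $\mathcal{R}([0,\infty))>0$. Given a reset law $\mathcal{R}$ and a law $\mathcal{T}$ on $[0,\infty]$: let $(T_j)$ be i.i.d. with law $\mathcal{T}$ and $(R_j)$ an independent i.i.d. sequence with law $\mathcal{R}$; $\mathcal{T}^{\mathcal{R}}$ is the law of $\tilde T$ defined a.s. by $\tilde T=R_1+\cdots+R_{j-1}+T_j$ on $\{R_1<T_1,\ldots,R_{j-1}<T_{j-1},T_j\leq R_j\}$, $j\in\mathbb{N}$. $\delta_r$ is the Dirac mass at $r$, $\mathrm{Exp}(\mu)$ the exponential law with mean $\mu^{-1}$. $\mathcal{A}\leq_{\mathrm{st}}\mathcal{B}$ means $\mathcal{A}((t,\infty])\leq\mathcal{B}((t,\infty])$ for all $t\in[0,\infty)$. *)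

theory Defs
  imports "HOL-Probability.Probability"
begin

text \<open>Laws on [0,\<infinity>] are measures on the Borel sets of the type ennreal.\<close>

definition is_law :: "ennreal measure \<Rightarrow> bool" where
  "is_law Q \<longleftrightarrow> prob_space Q \<and> sets Q = sets borel"

definition is_reset_law :: "ennreal measure \<Rightarrow> bool" where
  "is_reset_law R \<longleftrightarrow> is_law R \<and> emeasure R {0<..} > 0 \<and> emeasure R {..<\<infinity>} > 0"

definition mean :: "ennreal measure \<Rightarrow> ennreal" where
  "mean Q = (\<integral>\<^sup>+ t. t \<partial>Q)"

definition stoch_le :: "ennreal measure \<Rightarrow> ennreal measure \<Rightarrow> bool" where
  "stoch_le A B \<longleftrightarrow> (\<forall>t::ennreal. t < \<infinity> \<longrightarrow> emeasure A {t<..} \<le> emeasure B {t<..})"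

text \<open>The completion time under resetting, as a function of the sequence of pairs
  (T_j, R_j) (indices starting at 0). On the event that T_j \<le> R_j never occurs
  (where the paper leaves it undefined) we set the value to \<infinity>.\<close>
definition reset_time :: "(nat \<Rightarrow> ennreal \<times> ennreal) \<Rightarrow> ennreal" where
  "reset_time \<omega> =
     (if \<exists>j. fst (\<omega> j) \<le> snd (\<omega> j)
      then (let j = (LEAST j. fst (\<omega> j) \<le> snd (\<omega> j))
            in (\<Sum>i<j. snd (\<omega> i)) + fst (\<omega> j))
      else \<infinity>)"

text \<open>T^R: law of the reset time when the pairs (T_j,R_j) are i.i.d. with law T \<otimes> R
  (equivalently, (T_j) i.i.d. ~ T independent of (R_j) i.i.d. ~ R).\<close>
definition reset_transform :: "ennreal measure \<Rightarrow> ennreal measure \<Rightarrow> ennreal measure" where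
  "reset_transform T R = distr (PiM UNIV (\<lambda>_::nat. T \<Otimes>\<^sub>M R)) borel reset_time"

definition dirac_law :: "real \<Rightarrow> ennreal measure" where
  "dirac_law r = return borel (ennreal r)"

text \<open>Exp(mu): exponential law with rate mu (mean 1/mu).\<close>
definition exp_law :: "real \<Rightarrow> ennreal measure" where
  "exp_law \<mu> = distr (density lborel (exponential_density \<mu>)) borel ennreal"

text \<open>Weibull law with shape k: tail e^(-x^k); given by its density k x^(k-1) e^(-x^k) on (0,\<infinity>).\<close>
definition weibull :: "real \<Rightarrow> ennreal measure" where
  "weibull k = distr (density lborel
      (\<lambda>x. ennreal (indicator {0<..} x * (k * x powr (k - 1) * exp (- (x powr k))))))
      borel ennreal"

end

theory Submission
  imports Defs "HOL-Real_Asymp.Real_Asymp"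
begin

lemma gamma_h_mono:
  fixes x y :: real assumes "0 < x" "x < y"
  shows "ln_Gamma (1+2*x) - 2*ln_Gamma(1+x) < ln_Gamma (1+2*y) - 2*ln_Gamma(1+y)"
proof (rule DERIV_pos_imp_increasing[OF assms(2), where f="\<lambda>z. ln_Gamma (1+2*z) - 2*ln_Gamma(1+z)"])
  fix z assume z: "x \<le> z" "z \<le> y"
  hence zp: "z > 0" using assms by auto
  show "\<exists>d. ((\<lambda>z. ln_Gamma (1+2*z) - 2*ln_Gamma(1+z)) has_real_derivative d) (at z) \<and> 0 < d"
  proof (intro exI conjI)
    show "((\<lambda>z. ln_Gamma (1+2*z) - 2*ln_Gamma(1+z)) has_real_derivative
       (Digamma (1+2*z) * (0+2*1) - 2 * (Digamma (1+z) * (0+1)))) (at z)"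
      using zp by (intro derivative_intros DERIV_cmult) auto
    have "Digamma (1+z) < Digamma (1+2*z)" using zp by (intro Digamma_real_strict_mono) auto
    thus "0 < Digamma (1+2*z) * (0+2*1) - 2 * (Digamma (1+z) * (0+1))" by simp
  qed
qed

lemma gamma_part:
  fixes k :: real assumes k: "k > 0"
  shows "k \<le> 1 \<longleftrightarrow> Gamma (1 + 2 / k) \<ge> 2 * (Gamma (1 + 1 / k))\<^sup>2"
proof -
  define x where "x = 1/k"
  have xp: "x > 0" using k by (simp add: x_def)
  have 2: "2/k = 2*x" by (simp add: x_def)
  define h where "h = (\<lambda>x::real. ln_Gamma (1+2*x) - 2*ln_Gamma(1+x))"
  have g3: "Gamma (3::real) = 2" using Gamma_numeral[of "Num.Bit1 Num.One"] by simp
  have g2: "Gamma (2::real) = 1" using Gamma_numeral[of "Num.Bit0 Num.One"] by simp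
  have h1: "h 1 = ln 2"
    unfolding h_def using g3 g2 by (simp add: ln_Gamma_real_pos)
  have pa: "Gamma (1+2*x) > 0" "Gamma (1+x) > 0" using xp by auto
  have "Gamma (1 + 2 / k) \<ge> 2 * (Gamma (1 + 1 / k))\<^sup>2 \<longleftrightarrow>
        ln (Gamma (1 + 2*x)) \<ge> ln (2 * (Gamma (1 + x))\<^sup>2)"
    using pa unfolding 2 x_def[symmetric] by (intro ln_le_cancel_iff[symmetric]) auto
  also have "ln (2 * (Gamma (1 + x))\<^sup>2) = ln 2 + 2 * ln (Gamma (1+x))"
    using pa by (simp add: ln_mult ln_realpow)
  also have "ln (Gamma (1 + 2*x)) \<ge> ln 2 + 2 * ln (Gamma (1+x)) \<longleftrightarrow> h x \<ge> h 1"
    using pa xp unfolding h1 unfolding h_def by (auto simp: ln_Gamma_real_pos)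
  also have "\<dots> \<longleftrightarrow> x \<ge> 1"
  proof
    assume "h x \<ge> h 1" show "x \<ge> 1"
    proof (rule ccontr)
      assume "\<not> x \<ge> 1" hence "h x < h 1" using gamma_h_mono[of x 1] xp by (simp add: h_def)
      thus False using \<open>h x \<ge> h 1\<close> by simp
    qed
  next
    assume "x \<ge> 1" thus "h x \<ge> h 1"
      using gamma_h_mono[of 1 x] by (cases "x = 1") (auto simp: h_def)
  qed
  also have "\<dots> \<longleftrightarrow> k \<le> 1" using k by (simp add: x_def field_simps)
  finally show ?thesis ..
qed

definition U :: "real \<Rightarrow> ennreal set" where
  "U a = {x. x = top \<or> a < enn2real x}"

lemma U_neg: "a < 0 \<Longrightarrow> U a = UNIV"
  by (auto simp: U_def) (smt (verit) enn2real_nonneg)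

lemma U_sets[measurable]: "U a \<in> sets borel"
  unfolding U_def by measurable

lemma greaterThan_U: "t < \<infinity> \<Longrightarrow> {t<..} = U (enn2real t)"
  unfolding U_def
  by (auto simp: less_top) (metis enn2real_less_iff ennreal_enn2real_if less_top top.not_eq_extremum)+

lemma U_ennreal: "0 \<le> a \<Longrightarrow> U a = {ennreal a<..}"
  using greaterThan_U[of "ennreal a"] by simp

lemma plus_U: assumes "0 \<le> r" shows "{x. ennreal r + x \<in> U a} = U (a - r)"
proof -
  have "ennreal r + x \<in> U a \<longleftrightarrow> x \<in> U (a - r)" for x
  proof (cases "x = top")
    case False
    hence "enn2real (ennreal r + x) = r + enn2real x" using assms
      by (subst enn2real_plus) (auto simp: less_top)
    thus ?thesis using False unfolding U_def by auto
  qed (auto simp: U_def)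
  thus ?thesis by auto
qed

lemma U_anti: "a \<le> b \<Longrightarrow> U b \<subseteq> U a"
  unfolding U_def by auto

lemma lborel_Ici_infinite: "emeasure lborel {0::real..} = \<infinity>"
proof -
  have "of_nat n \<le> emeasure lborel {0::real..}" for n
  proof -
    have "emeasure lborel {0::real..<real n} \<le> emeasure lborel {0::real..}"
      by (intro emeasure_mono) auto
    thus ?thesis by (simp add: ennreal_of_nat_eq_real_of_nat)
  qed
  hence "(SUP n. of_nat n) \<le> emeasure lborel {0::real..}" by (intro SUP_least) auto
  thus ?thesis by (simp add: ennreal_SUP_of_nat_eq_top top_unique)
qed

lemma tail_integral_point:
  "(\<integral>\<^sup>+ t. indicator {0..} t * indicator (U t) x \<partial>lborel) = x"
proof (cases "x = top")
  case True
  hence "(\<lambda>t. indicator {0..} t * indicator (U t) x :: ennreal) = indicator {0..}"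
    by (auto simp: U_def fun_eq_iff)
  thus ?thesis using True lborel_Ici_infinite by simp
next
  case False
  then obtain y where y: "x = ennreal y" "y \<ge> 0" by (metis ennreal_cases top_neq_ennreal)
  hence "(\<lambda>t. indicator {0..} t * indicator (U t) x :: ennreal) = indicator {0..<y}"
    by (auto simp: U_def fun_eq_iff indicator_def)
  thus ?thesis using y by simp
qed

lemma mean_tail:
  assumes Q: "is_law Q"
  shows "mean Q = (\<integral>\<^sup>+ t. emeasure Q (U t) * indicator {0..} t \<partial>lborel)"
proof -
  interpret Q: prob_space Q using Q by (simp add: is_law_def)
  have sQ[measurable_cong]: "sets Q = sets borel" using Q by (simp add: is_law_def)
  interpret pair_sigma_finite lborel Q
    by (simp add: pair_sigma_finite_def lborel.sigma_finite_measure_axioms Q.sigma_finite_measure_axioms)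
  have meas: "(\<lambda>(t,x). indicator {0..} t * indicator (U t) x :: ennreal) \<in> borel_measurable (lborel \<Otimes>\<^sub>M Q)"
  proof -
    have "(\<lambda>p. if 0 \<le> fst p \<and> (snd p = top \<or> fst p < enn2real (snd p)) then 1 else 0 :: ennreal)
       \<in> borel_measurable (lborel \<Otimes>\<^sub>M Q)" by measurable
    moreover have "(\<lambda>p. if 0 \<le> fst p \<and> (snd p = top \<or> fst p < enn2real (snd p)) then 1 else 0 :: ennreal)
       = (\<lambda>(t,x). indicator {0..} t * indicator (U t) x :: ennreal)"
      by (auto simp: fun_eq_iff indicator_def U_def)
    ultimately show ?thesis by simp
  qed
  have "mean Q = (\<integral>\<^sup>+ x. (\<integral>\<^sup>+ t. indicator {0..} t * indicator (U t) x \<partial>lborel) \<partial>Q)"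
    unfolding mean_def tail_integral_point ..
  also have "\<dots> = (\<integral>\<^sup>+ t. (\<integral>\<^sup>+ x. indicator {0..} t * indicator (U t) x \<partial>Q) \<partial>lborel)"
    using Fubini'[OF meas] by simp
  also have "\<dots> = (\<integral>\<^sup>+ t. emeasure Q (U t) * indicator {0..} t \<partial>lborel)"
    by (intro nn_integral_cong) (simp add: nn_integral_cmult_indicator sQ mult.commute)
  finally show ?thesis .
qed

lemma stoch_le_U: "stoch_le A B \<longleftrightarrow> (\<forall>a\<ge>0. emeasure A (U a) \<le> emeasure B (U a))"
  unfolding stoch_le_def
proof safe
  fix a :: real assume "\<forall>t<\<infinity>. emeasure A {t<..} \<le> emeasure B {t<..}" "0 \<le> a"
  thus "emeasure A (U a) \<le> emeasure B (U a)" by (auto simp: U_ennreal)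
next
  fix t :: ennreal assume "\<forall>a\<ge>0. emeasure A (U a) \<le> emeasure B (U a)" "t < \<infinity>"
  thus "emeasure A {t<..} \<le> emeasure B {t<..}" by (simp add: greaterThan_U)
qed

lemma stoch_le_mean:
  assumes "is_law A" "is_law B" "stoch_le A B"
  shows "mean A \<le> mean B"
  unfolding mean_tail[OF assms(1)] mean_tail[OF assms(2)]
  using assms(3) unfolding stoch_le_U
  by (intro nn_integral_mono) (auto simp: indicator_def)

lemma law_eqI:
  assumes A: "is_law A" and B: "is_law B"
    and eq: "\<And>a. a \<ge> 0 \<Longrightarrow> emeasure A (U a) = emeasure B (U a)"
  shows "A = B"
proof -
  interpret A: prob_space A using A by (simp add: is_law_def)
  interpret B: prob_space B using B by (simp add: is_law_def)
  let ?E = "insert UNIV (range greaterThan) :: ennreal set set"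
  have sig: "sigma_sets UNIV ?E = sets (borel :: ennreal measure)"
  proof -
    have "sets (borel :: ennreal measure) = sigma_sets UNIV (range greaterThan)"
      by (subst borel_Ioi) (simp add: sets_measure_of)
    moreover have "sigma_sets UNIV ?E = sigma_sets UNIV (range greaterThan :: ennreal set set)"
    proof
      show "sigma_sets UNIV ?E \<subseteq> sigma_sets UNIV (range greaterThan)"
        by (intro sigma_sets_mono) (auto intro: sigma_sets_top sigma_sets.Basic)
      show "sigma_sets UNIV (range greaterThan) \<subseteq> sigma_sets UNIV ?E"
        by (intro sigma_sets_mono) (auto intro: sigma_sets.Basic)
    qed
    ultimately show ?thesis by simp
  qed
  show ?thesis
  proof (rule measure_eqI_generator_eq[where E="?E" and \<Omega>=UNIV and A="\<lambda>_. UNIV"])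
    show "Int_stable ?E"
      unfolding Int_stable_def
    proof (intro ballI)
      fix X Y assume X: "X \<in> ?E" and Y: "Y \<in> ?E"
      have m: "{a<..} \<inter> {b<..} = {max a b<..}" for a b :: ennreal by auto
      from X Y show "X \<inter> Y \<in> ?E"
        by (auto simp: m simp del: greaterThan_Int_greaterThan)
    qed
    show "?E \<subseteq> Pow UNIV" by auto
    show "sets A = sigma_sets UNIV ?E" using A sig by (simp add: is_law_def)
    show "sets B = sigma_sets UNIV ?E" using B sig by (simp add: is_law_def)
    show "range (\<lambda>_. UNIV) \<subseteq> ?E" by auto
    show "(\<Union>i::nat. UNIV) = UNIV" by simp
    show "emeasure A UNIV \<noteq> \<infinity>" for i :: nat
      using A.emeasure_space_1 A by (simp add: is_law_def sets_eq_imp_space_eq[of A borel])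
    fix X assume "X \<in> ?E"
    then consider "X = UNIV" | t where "X = {t<..}" by auto
    thus "emeasure A X = emeasure B X"
    proof cases
      case 1 thus ?thesis using A.emeasure_space_1 B.emeasure_space_1 A B
        by (simp add: is_law_def sets_eq_imp_space_eq[of A borel] sets_eq_imp_space_eq[of B borel])
    next
      case (2 t)
      show ?thesis
      proof (cases "t = \<infinity>")
        case True have "{t<..} = {}" using True by auto thus ?thesis using 2 by simp
      next
        case False thus ?thesis using 2 eq[of "enn2real t"] by (simp add: greaterThan_U less_top)
      qed
    qed
  qed
qed

lemma emeasure_U_measurable[measurable]:
  assumes Q: "is_law Q"
  shows "(\<lambda>b. emeasure Q (U b)) \<in> borel_measurable borel"
proof -
  interpret Q: prob_space Q using Q by (simp add: is_law_def)
  have sQ: "sets Q = sets borel" using Q by (simp add: is_law_def)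
  have "mono (\<lambda>b. - measure Q (U b))"
    by (auto simp: mono_def sQ intro!: Q.finite_measure_mono U_anti)
  hence "(\<lambda>b. - measure Q (U b)) \<in> borel_measurable borel" by (rule borel_measurable_mono)
  hence "(\<lambda>b. - (- measure Q (U b))) \<in> borel_measurable borel" by measurable
  hence "(\<lambda>b. ennreal (measure Q (U b))) \<in> borel_measurable borel" by simp
  thus ?thesis by (simp add: Q.emeasure_eq_measure)
qed

lemma ennreal_diff_plus: "(y::real) \<le> x \<Longrightarrow> 0 \<le> y \<Longrightarrow> ennreal (x - y) + ennreal y = ennreal x"
  by (subst ennreal_plus[symmetric]) auto

locale reset_setting =
  fixes T R :: "ennreal measure"
  assumes T: "is_law T" and R: "is_law R"
begin

abbreviation "M \<equiv> T \<Otimes>\<^sub>M R"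
abbreviation "P \<equiv> PiM (UNIV::nat set) (\<lambda>_. M)"
abbreviation "\<nu> \<equiv> reset_transform T R"

lemma sT[measurable_cong]: "sets T = sets borel" using T by (simp add: is_law_def)
lemma sR[measurable_cong]: "sets R = sets borel" using R by (simp add: is_law_def)

sublocale T: prob_space T using T by (simp add: is_law_def)
sublocale R: prob_space R using R by (simp add: is_law_def)
sublocale TR: pair_prob_space T R ..
sublocale MP: sequence_space M
  by (unfold_locales)

lemma measurable_reset_time[measurable]: "reset_time \<in> borel_measurable P"
  unfolding reset_time_def Let_def by measurable

lemma nu_law: "is_law \<nu>"
  unfolding is_law_def reset_transform_def
  by (auto intro!: MP.prob_space_distr)

lemma snu[measurable_cong]: "sets \<nu> = sets borel"
  using nu_law by (simp add: is_law_def)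

sublocale nu: prob_space \<nu> using nu_law by (simp add: is_law_def)

lemma reset_time_case_nat:
  "reset_time (case_nat s \<omega>) = (if fst s \<le> snd s then fst s else snd s + reset_time \<omega>)"
proof (cases "fst s \<le> snd s")
  case True
  hence "(LEAST j. fst (case_nat s \<omega> j) \<le> snd (case_nat s \<omega> j)) = 0"
    by (intro Least_eq_0) simp
  moreover have "\<exists>j. fst (case_nat s \<omega> j) \<le> snd (case_nat s \<omega> j)"
    using True by (intro exI[of _ 0]) simp
  ultimately show ?thesis using True unfolding reset_time_def Let_def by simp
next
  case False
  show ?thesis
  proof (cases "\<exists>j. fst (\<omega> j) \<le> snd (\<omega> j)")
    case True
    then obtain j where j: "fst (\<omega> j) \<le> snd (\<omega> j)" by auto
    have L: "(LEAST j. fst (case_nat s \<omega> j) \<le> snd (case_nat s \<omega> j))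
          = Suc (LEAST j. fst (\<omega> j) \<le> snd (\<omega> j))"
      using False j by (subst Least_Suc[of _ "Suc j"]) auto
    have ex: "\<exists>j. fst (case_nat s \<omega> j) \<le> snd (case_nat s \<omega> j)"
      using j by (intro exI[of _ "Suc j"]) simp
    define J where "J = (LEAST j. fst (\<omega> j) \<le> snd (\<omega> j))"
    have sm: "(\<Sum>i<Suc J. snd (case_nat s \<omega> i)) = snd s + (\<Sum>i<J. snd (\<omega> i))"
      by (simp only: sum.lessThan_Suc_shift) simp
    show ?thesis using False True ex unfolding reset_time_def Let_def L J_def[symmetric]
      by (simp del: sum.lessThan_Suc add: sm add.assoc)
  next
    case nex: False
    have "\<not> (\<exists>j. fst (case_nat s \<omega> j) \<le> snd (case_nat s \<omega> j))"
      using nex False by (auto split: nat.splits)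
    thus ?thesis using False nex unfolding reset_time_def by simp
  qed
qed

lemma measurable_case_nat_pair[measurable]:
  "(\<lambda>(s, \<omega>). case_nat s \<omega>) \<in> measurable (M \<Otimes>\<^sub>M P) P"
  by measurable

lemma fixpoint:
  assumes g[measurable]: "g \<in> borel_measurable borel"
  shows "(\<integral>\<^sup>+x. g x \<partial>\<nu>) =
    (\<integral>\<^sup>+ s. (if fst s \<le> snd s then g (fst s) else \<integral>\<^sup>+x. g (snd s + x) \<partial>\<nu>) \<partial>M)"
proof -
  have "(\<integral>\<^sup>+x. g x \<partial>\<nu>) = (\<integral>\<^sup>+\<omega>. g (reset_time \<omega>) \<partial>P)"
    unfolding reset_transform_def by (subst nn_integral_distr) auto
  also have "\<dots> = (\<integral>\<^sup>+\<omega>. g (reset_time \<omega>) \<partial>(distr (M \<Otimes>\<^sub>M P) P (\<lambda>(s, \<omega>). case_nat s \<omega>)))"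
    by (simp only: MP.PiM_iter)
  also have "\<dots> = (\<integral>\<^sup>+p. g (reset_time (case_prod case_nat p)) \<partial>(M \<Otimes>\<^sub>M P))"
    by (subst nn_integral_distr) (auto simp: case_prod_beta)
  also have "\<dots> = (\<integral>\<^sup>+s. \<integral>\<^sup>+\<omega>. g (reset_time (case_nat s \<omega>)) \<partial>P \<partial>M)"
    by (subst MP.P.nn_integral_fst[symmetric]) (auto simp: case_prod_beta)
  also have "\<dots> = (\<integral>\<^sup>+ s. (if fst s \<le> snd s then g (fst s) else \<integral>\<^sup>+x. g (snd s + x) \<partial>\<nu>) \<partial>M)"
  proof (intro nn_integral_cong)
    fix s assume s: "s \<in> space M"
    show "(\<integral>\<^sup>+\<omega>. g (reset_time (case_nat s \<omega>)) \<partial>P) =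
      (if fst s \<le> snd s then g (fst s) else \<integral>\<^sup>+x. g (snd s + x) \<partial>\<nu>)"
    proof (cases "fst s \<le> snd s")
      case True thus ?thesis by (simp add: reset_time_case_nat MP.P.emeasure_space_1)
    next
      case False
      have "(\<integral>\<^sup>+\<omega>. g (reset_time (case_nat s \<omega>)) \<partial>P) = (\<integral>\<^sup>+\<omega>. g (snd s + reset_time \<omega>) \<partial>P)"
        using False by (simp add: reset_time_case_nat)
      also have "\<dots> = (\<integral>\<^sup>+x. g (snd s + x) \<partial>\<nu>)"
        unfolding reset_transform_def by (subst nn_integral_distr) auto
      finally show ?thesis using False by simp
    qed
  qed
  finally show ?thesis .
qed

lemma tail_rec:
  "emeasure \<nu> (U a) = (\<integral>\<^sup>+ s. (if fst s \<le> snd s then indicator (U a) (fst s)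
      else emeasure \<nu> (U (a - enn2real (snd s)))) \<partial>M)"
proof -
  have "emeasure \<nu> (U a) = (\<integral>\<^sup>+x. indicator (U a) x \<partial>\<nu>)" by simp
  also have "\<dots> = (\<integral>\<^sup>+ s. (if fst s \<le> snd s then indicator (U a) (fst s)
      else \<integral>\<^sup>+x. indicator (U a) (snd s + x) \<partial>\<nu>) \<partial>M)"
    by (rule fixpoint) simp
  also have "\<dots> = (\<integral>\<^sup>+ s. (if fst s \<le> snd s then indicator (U a) (fst s)
      else emeasure \<nu> (U (a - enn2real (snd s)))) \<partial>M)"
  proof (intro nn_integral_cong)
    fix s :: "ennreal \<times> ennreal"
    show "(if fst s \<le> snd s then indicator (U a) (fst s)
      else \<integral>\<^sup>+x. indicator (U a) (snd s + x) \<partial>\<nu>) = (if fst s \<le> snd s then indicator (U a) (fst s)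
      else emeasure \<nu> (U (a - enn2real (snd s))))"
    proof (cases "fst s \<le> snd s")
      case False
      hence fin: "snd s = ennreal (enn2real (snd s))"
        by (metis ennreal_enn2real_if not_le top.not_eq_extremum top_greatest)
      have "(\<lambda>x. indicator (U a) (snd s + x) :: ennreal) = indicator {x. ennreal (enn2real (snd s)) + x \<in> U a}"
        by (subst fin) (auto simp: indicator_def fun_eq_iff)
      also have "\<dots> = indicator (U (a - enn2real (snd s)))"
        by (subst plus_U) auto
      finally show ?thesis using False by simp
    qed simp
  qed
  finally show ?thesis .
qed

lemma mean_rec:
  "mean \<nu> = (\<integral>\<^sup>+ s. min (fst s) (snd s) \<partial>M) + mean \<nu> * emeasure M {s\<in>space M. \<not> fst s \<le> snd s}"
proof -
  have "mean \<nu> = (\<integral>\<^sup>+ s. (if fst s \<le> snd s then fst s else \<integral>\<^sup>+x. (snd s + x) \<partial>\<nu>) \<partial>M)"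
    unfolding mean_def by (rule fixpoint) simp
  also have "\<dots> = (\<integral>\<^sup>+ s. min (fst s) (snd s) + mean \<nu> * indicator {s\<in>space M. \<not> fst s \<le> snd s} s \<partial>M)"
  proof (intro nn_integral_cong)
    fix s assume s: "s \<in> space M"
    have "(\<integral>\<^sup>+x. (snd s + x) \<partial>\<nu>) = snd s + mean \<nu>"
      unfolding mean_def by (subst nn_integral_add) (auto simp: nu.emeasure_space_1)
    thus "(if fst s \<le> snd s then fst s else \<integral>\<^sup>+x. (snd s + x) \<partial>\<nu>) =
      min (fst s) (snd s) + mean \<nu> * indicator {s\<in>space M. \<not> fst s \<le> snd s} s"
      using s by (auto simp: min_def indicator_def)
  qed
  also have "\<dots> = (\<integral>\<^sup>+ s. min (fst s) (snd s) \<partial>M) + mean \<nu> * emeasure M {s\<in>space M. \<not> fst s \<le> snd s}"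
    by (subst nn_integral_add) (auto simp: nn_integral_cmult_indicator)
  finally show ?thesis .
qed

lemma inner_T:
  assumes Sdef: "\<And>b. emeasure T (U b) = ennreal (S b)" and S0: "\<And>b. S b \<ge> 0"
  shows "(\<integral>\<^sup>+t. (if t \<le> r then indicator (U a) t else ennreal (S (a - enn2real r))) \<partial>T)
     = (if r = top \<or> a < enn2real r then ennreal (S a) else ennreal (S (a - enn2real r) * S (enn2real r)))"
proof -
  have "(\<integral>\<^sup>+t. (if t \<le> r then indicator (U a) t else ennreal (S (a - enn2real r))) \<partial>T)
    = (\<integral>\<^sup>+t. indicator {t. t \<le> r \<and> t \<in> U a} t + ennreal (S (a - enn2real r)) * indicator {t. \<not> t \<le> r} t \<partial>T)"
    by (intro nn_integral_cong) (auto simp: indicator_def)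
  also have "\<dots> = emeasure T {t. t \<le> r \<and> t \<in> U a} + ennreal (S (a - enn2real r)) * emeasure T {t. \<not> t \<le> r}"
    by (subst nn_integral_add) (auto simp: sT nn_integral_cmult_indicator)
  also have "\<dots> = (if r = top \<or> a < enn2real r then ennreal (S a) else ennreal (S (a - enn2real r) * S (enn2real r)))"
  proof (cases "r = top")
    case True thus ?thesis using Sdef[of a] by simp
  next
    case False
    then obtain \<rho> where r: "r = ennreal \<rho>" "\<rho> \<ge> 0" by (metis ennreal_cases)
    have c: "{t. \<not> t \<le> r} = U \<rho>" using r by (auto simp: U_ennreal not_le)
    show ?thesis
    proof (cases "a < \<rho>")
      case True
      have "U (a - \<rho>) = UNIV" using True by (intro U_neg) simp
      hence S1: "ennreal (S (a - \<rho>)) = 1" using Sdef[of "a - \<rho>"] T.emeasure_space_1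
        by (simp add: sets_eq_imp_space_eq[OF sT])
      have d: "{t. t \<le> r \<and> t \<in> U a} = U a - U \<rho>" using c by auto
      have "emeasure T (U a - U \<rho>) + emeasure T (U \<rho>) = emeasure T (U a)"
      proof -
        have "emeasure T (U a - U \<rho>) + emeasure T (U \<rho>) = emeasure T ((U a - U \<rho>) \<union> U \<rho>)"
          by (intro plus_emeasure) (auto simp: sT)
        also have "(U a - U \<rho>) \<union> U \<rho> = U a" using True U_anti[of a \<rho>] by auto
        finally show ?thesis .
      qed
      thus ?thesis using True r c d S1 Sdef by simp
    next
      case False
      have d: "{t. t \<le> ennreal \<rho> \<and> t \<in> U a} = {}"
      proof (safe)
        fix t assume t: "t \<le> ennreal \<rho>" "t \<in> U a"
        have "t \<noteq> top" using t(1) by (metis ennreal_neq_top top.extremum_uniqueI)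
        moreover have "enn2real t \<le> \<rho>" using t(1) r(2) by (cases t) auto
        ultimately show "t \<in> {}" using t(2) False by (auto simp: U_def)
      qed
      show ?thesis using False r c Sdef S0 by (simp add: d ennreal_mult')
    qed
  qed
  finally show ?thesis .
qed

lemma outer_eq:
  assumes Sdef: "\<And>b. emeasure T (U b) = ennreal (S b)" and S0: "\<And>b. S b \<ge> 0"
    and Sm[measurable]: "S \<in> borel_measurable borel"
  shows "(\<integral>\<^sup>+ s. (if fst s \<le> snd s then indicator (U a) (fst s) else ennreal (S (a - enn2real (snd s)))) \<partial>M)
    = (\<integral>\<^sup>+ r. (if r = top \<or> a < enn2real r then ennreal (S a) else ennreal (S (a - enn2real r) * S (enn2real r))) \<partial>R)"
proof -
  have "(\<integral>\<^sup>+ s. (if fst s \<le> snd s then indicator (U a) (fst s) else ennreal (S (a - enn2real (snd s)))) \<partial>M)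
    = (\<integral>\<^sup>+ r. \<integral>\<^sup>+ t. (if t \<le> r then indicator (U a) t else ennreal (S (a - enn2real r))) \<partial>T \<partial>R)"
  proof -
    have m: "(\<lambda>s. (if fst s \<le> snd s then indicator (U a) (fst s) else ennreal (S (a - enn2real (snd s))))) \<in> borel_measurable M"
      by measurable
    show ?thesis using TR.nn_integral_snd[OF m, symmetric] by (simp cong: if_cong)
  qed
  also have "\<dots> = (\<integral>\<^sup>+ r. (if r = top \<or> a < enn2real r then ennreal (S a) else ennreal (S (a - enn2real r) * S (enn2real r))) \<partial>R)"
    by (simp add: inner_T[OF Sdef S0])
  finally show ?thesis .
qed

lemma outer_le:
  assumes Sdef: "\<And>b. emeasure T (U b) = ennreal (S b)" and S0: "\<And>b. S b \<ge> 0"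
    and Sm[measurable]: "S \<in> borel_measurable borel"
    and nwu: "\<And>x y. 0 \<le> x \<Longrightarrow> 0 \<le> y \<Longrightarrow> S x * S y \<le> S (x + y)"
  shows "(\<integral>\<^sup>+ s. (if fst s \<le> snd s then indicator (U a) (fst s) else ennreal (S (a - enn2real (snd s)))) \<partial>M)
    \<le> ennreal (S a)"
  unfolding outer_eq[OF Sdef S0 Sm]
proof -
  have "(\<integral>\<^sup>+ r. (if r = top \<or> a < enn2real r then ennreal (S a) else ennreal (S (a - enn2real r) * S (enn2real r))) \<partial>R)
     \<le> (\<integral>\<^sup>+ r. ennreal (S a) \<partial>R)"
  proof (intro nn_integral_mono)
    fix r :: ennreal
    have "\<not> a < enn2real r \<Longrightarrow> S (a - enn2real r) * S (enn2real r) \<le> S a"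
      using nwu[of "a - enn2real r" "enn2real r"] by simp
    thus "(if r = top \<or> a < enn2real r then ennreal (S a) else ennreal (S (a - enn2real r) * S (enn2real r))) \<le> ennreal (S a)"
      by (auto intro: ennreal_leI)
  qed
  thus "(\<integral>\<^sup>+ r. (if r = top \<or> a < enn2real r then ennreal (S a) else ennreal (S (a - enn2real r) * S (enn2real r))) \<partial>R)
     \<le> ennreal (S a)" by (simp add: R.emeasure_space_1)
qed

lemma outer_ge:
  assumes Sdef: "\<And>b. emeasure T (U b) = ennreal (S b)" and S0: "\<And>b. S b \<ge> 0"
    and Sm[measurable]: "S \<in> borel_measurable borel"
    and nbu: "\<And>x y. 0 \<le> x \<Longrightarrow> 0 \<le> y \<Longrightarrow> S (x + y) \<le> S x * S y"
  shows "ennreal (S a) \<le> (\<integral>\<^sup>+ s. (if fst s \<le> snd s then indicator (U a) (fst s) else ennreal (S (a - enn2real (snd s)))) \<partial>M)"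
  unfolding outer_eq[OF Sdef S0 Sm]
proof -
  have "(\<integral>\<^sup>+ r. ennreal (S a) \<partial>R) \<le> (\<integral>\<^sup>+ r. (if r = top \<or> a < enn2real r then ennreal (S a) else ennreal (S (a - enn2real r) * S (enn2real r))) \<partial>R)"
  proof (intro nn_integral_mono)
    fix r :: ennreal
    have "\<not> a < enn2real r \<Longrightarrow> S a \<le> S (a - enn2real r) * S (enn2real r)"
      using nbu[of "a - enn2real r" "enn2real r"] by simp
    thus "ennreal (S a) \<le> (if r = top \<or> a < enn2real r then ennreal (S a) else ennreal (S (a - enn2real r) * S (enn2real r)))"
      by (auto intro: ennreal_leI)
  qed
  thus "ennreal (S a) \<le> (\<integral>\<^sup>+ r. (if r = top \<or> a < enn2real r then ennreal (S a) else ennreal (S (a - enn2real r) * S (enn2real r))) \<partial>R)"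
    by (simp add: R.emeasure_space_1)
qed

abbreviation "Nset \<equiv> {s\<in>space M. \<not> fst s \<le> snd s}"

lemma Nset_sets[measurable]: "Nset \<in> sets M" by measurable

lemma p_lt_1:
  assumes pos: "emeasure M {s\<in>space M. fst s \<le> snd s} > 0"
  shows "measure M Nset < 1"
proof -
  have C: "{s\<in>space M. fst s \<le> snd s} \<in> sets M" by measurable
  have "Nset = space M - {s\<in>space M. fst s \<le> snd s}" by auto
  hence "measure M Nset = 1 - measure M {s\<in>space M. fst s \<le> snd s}"
    using TR.prob_compl[OF C] by simp
  moreover have "measure M {s\<in>space M. fst s \<le> snd s} > 0"
    using pos by (simp add: TR.emeasure_eq_measure)
  ultimately show ?thesis by simp
qed

lemma ennreal_le_plus_real:
  fixes x y z :: real
  assumes "ennreal x \<le> ennreal y + ennreal z" "0 \<le> y" "0 \<le> z"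
  shows "x \<le> y + z"
proof -
  have "ennreal x \<le> ennreal (y + z)" using assms by (subst ennreal_plus) auto
  thus ?thesis using assms by (subst (asm) ennreal_le_iff) auto
qed

lemma limit_arg:
  fixes x y p :: real
  assumes "\<And>n. x \<le> y + p ^ n" "p < 1" "0 \<le> p"
  shows "x \<le> y"
proof (rule ccontr)
  assume "\<not> x \<le> y"
  then obtain n where "p ^ n < x - y" using real_arch_pow_inv[of "x - y" p] assms by auto
  thus False using assms(1)[of n] by simp
qed

lemma tail_le_T:
  assumes Sdef: "\<And>b. emeasure T (U b) = ennreal (S b)" and S0: "\<And>b. S b \<ge> 0"
    and Sm[measurable]: "S \<in> borel_measurable borel"
    and nwu: "\<And>x y. 0 \<le> x \<Longrightarrow> 0 \<le> y \<Longrightarrow> S x * S y \<le> S (x + y)"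
    and pos: "emeasure M {s\<in>space M. fst s \<le> snd s} > 0"
  shows "emeasure \<nu> (U a) \<le> emeasure T (U a)"
proof -
  define p where "p = measure M Nset"
  have p1: "p < 1" unfolding p_def by (rule p_lt_1[OF pos])
  have p0: "0 \<le> p" unfolding p_def by simp
  have pN: "emeasure M Nset = ennreal p" unfolding p_def by (simp add: TR.emeasure_eq_measure)
  have claim: "emeasure \<nu> (U b) \<le> ennreal (S b) + ennreal (p ^ n)" for n b
  proof (induction n arbitrary: b)
    case 0
    have "emeasure \<nu> (U b) \<le> 1" by (rule nu.emeasure_le_1)
    also have "1 \<le> ennreal (S b) + ennreal (p ^ 0)" by simp
    finally show ?case .
  next
    case (Suc n)
    have "emeasure \<nu> (U b) = (\<integral>\<^sup>+ s. (if fst s \<le> snd s then indicator (U b) (fst s)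
      else emeasure \<nu> (U (b - enn2real (snd s)))) \<partial>M)" by (rule tail_rec)
    also have "\<dots> \<le> (\<integral>\<^sup>+ s. (if fst s \<le> snd s then indicator (U b) (fst s)
      else ennreal (S (b - enn2real (snd s)))) + ennreal (p ^ n) * indicator Nset s \<partial>M)"
      by (intro nn_integral_mono) (auto simp: Suc.IH indicator_def)
    also have "\<dots> = (\<integral>\<^sup>+ s. (if fst s \<le> snd s then indicator (U b) (fst s)
      else ennreal (S (b - enn2real (snd s)))) \<partial>M) + ennreal (p ^ n) * ennreal p"
      by (subst nn_integral_add) (auto simp: nn_integral_cmult_indicator pN)
    also have "\<dots> \<le> ennreal (S b) + ennreal (p ^ n) * ennreal p"
      by (intro add_mono order_refl outer_le[OF Sdef S0 Sm nwu])
    also have "\<dots> = ennreal (S b) + ennreal (p ^ Suc n)"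
      using p0 by (simp add: ennreal_mult'[symmetric] mult.commute)
    finally show ?case .
  qed
  have "measure \<nu> (U a) \<le> S a"
  proof (rule limit_arg[OF _ p1 p0])
    fix n
    show "measure \<nu> (U a) \<le> S a + p ^ n"
      using claim[of a n] p0 S0[of a] by (intro ennreal_le_plus_real) (auto simp: nu.emeasure_eq_measure)
  qed
  thus ?thesis by (simp add: nu.emeasure_eq_measure Sdef ennreal_leI)
qed

lemma T_le_tail:
  assumes Sdef: "\<And>b. emeasure T (U b) = ennreal (S b)" and S0: "\<And>b. S b \<ge> 0"
    and Sm[measurable]: "S \<in> borel_measurable borel"
    and nbu: "\<And>x y. 0 \<le> x \<Longrightarrow> 0 \<le> y \<Longrightarrow> S (x + y) \<le> S x * S y"
    and pos: "emeasure M {s\<in>space M. fst s \<le> snd s} > 0"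
  shows "emeasure T (U a) \<le> emeasure \<nu> (U a)"
proof -
  define p where "p = measure M Nset"
  have p1: "p < 1" unfolding p_def by (rule p_lt_1[OF pos])
  have p0: "0 \<le> p" unfolding p_def by simp
  have pN: "emeasure M Nset = ennreal p" unfolding p_def by (simp add: TR.emeasure_eq_measure)
  have nuU[measurable]: "(\<lambda>b. emeasure \<nu> (U b)) \<in> borel_measurable borel"
    by (rule emeasure_U_measurable[OF nu_law])
  have claim: "ennreal (S b) \<le> emeasure \<nu> (U b) + ennreal (p ^ n)" for n b
  proof (induction n arbitrary: b)
    case 0
    have "ennreal (S b) \<le> 1" using Sdef[of b] T.emeasure_le_1[of "U b"] by simp
    also have "1 \<le> emeasure \<nu> (U b) + ennreal (p ^ 0)" by simp
    finally show ?case .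
  next
    case (Suc n)
    have "ennreal (S b) \<le> (\<integral>\<^sup>+ s. (if fst s \<le> snd s then indicator (U b) (fst s)
      else ennreal (S (b - enn2real (snd s)))) \<partial>M)"
      by (rule outer_ge[OF Sdef S0 Sm nbu])
    also have "\<dots> \<le> (\<integral>\<^sup>+ s. (if fst s \<le> snd s then indicator (U b) (fst s)
      else emeasure \<nu> (U (b - enn2real (snd s)))) + ennreal (p ^ n) * indicator Nset s \<partial>M)"
      by (intro nn_integral_mono) (auto simp: Suc.IH indicator_def)
    also have "\<dots> = (\<integral>\<^sup>+ s. (if fst s \<le> snd s then indicator (U b) (fst s)
      else emeasure \<nu> (U (b - enn2real (snd s)))) \<partial>M) + ennreal (p ^ n) * ennreal p"
      by (subst nn_integral_add) (auto simp: nn_integral_cmult_indicator pN)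
    also have "\<dots> = emeasure \<nu> (U b) + ennreal (p ^ Suc n)"
      using p0 by (simp add: tail_rec[symmetric] ennreal_mult'[symmetric] mult.commute)
    finally show ?case .
  qed
  have "S a \<le> measure \<nu> (U a)"
  proof (rule limit_arg[OF _ p1 p0])
    fix n
    show "S a \<le> measure \<nu> (U a) + p ^ n"
      using claim[of a n] p0 by (intro ennreal_le_plus_real) (auto simp: nu.emeasure_eq_measure)
  qed
  thus ?thesis by (simp add: nu.emeasure_eq_measure Sdef)
qed

abbreviation "Cset \<equiv> {s\<in>space M. fst s \<le> snd s}"
abbreviation "Em \<equiv> (\<integral>\<^sup>+ s. min (fst s) (snd s) \<partial>M)"

lemma Cset_sets[measurable]: "Cset \<in> sets M" by measurable

lemma mean_finite_eq:
  assumes fin: "mean \<nu> = ennreal e" "e \<ge> 0"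
  shows "Em = ennreal (e * measure M Cset)"
proof -
  have pN: "measure M Nset = 1 - measure M Cset"
  proof -
    have "Nset = space M - Cset" by auto
    thus ?thesis using TR.prob_compl[OF Cset_sets] by simp
  qed
  have eq: "ennreal e = Em + ennreal e * ennreal (measure M Nset)"
    using mean_rec fin by (simp add: TR.emeasure_eq_measure)
  have "Em \<le> Em + ennreal e * ennreal (measure M Nset)" by (rule add_increasing2) simp_all
  hence "Em \<le> ennreal e" using eq by simp
  hence "Em \<noteq> top" by (auto simp: top_unique)
  then obtain em where em: "Em = ennreal em" "em \<ge> 0" by (cases Em) auto
  have "ennreal e = ennreal (em + e * measure M Nset)"
    using eq em fin by (simp add: ennreal_mult'[symmetric] ennreal_plus)
  hence "e = em + e * measure M Nset" using em fin by (subst (asm) ennreal_inj) auto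
  hence "em = e * measure M Cset" using pN by (simp add: algebra_simps)
  thus ?thesis using em by simp
qed

lemma mean_gt_crit:
  assumes pos: "measure M Cset > 0" and mr: "mr \<ge> 0"
    and crit: "ennreal (mr * measure M Cset) < Em"
  shows "ennreal mr < mean \<nu>"
proof (cases "mean \<nu> = \<infinity>")
  case True thus ?thesis by simp
next
  case False
  then obtain e where e: "mean \<nu> = ennreal e" "e \<ge> 0" by (cases "mean \<nu>") auto
  have "ennreal (mr * measure M Cset) < ennreal (e * measure M Cset)"
    using crit mean_finite_eq[OF e] by simp
  hence "mr * measure M Cset < e * measure M Cset" using e pos mr by (subst (asm) ennreal_less_iff) auto
  hence "mr < e" using pos by simp
  thus ?thesis using e mr by (simp add: ennreal_lessI)
qed

lemma mean_lt_crit: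
  assumes pos: "measure M Cset > 0" and fin: "mean \<nu> < \<infinity>"
    and crit: "Em < ennreal (mr * measure M Cset)"
  shows "mean \<nu> < ennreal mr"
proof -
  obtain e where e: "mean \<nu> = ennreal e" "e \<ge> 0" using fin by (cases "mean \<nu>") auto
  have "ennreal (e * measure M Cset) < ennreal (mr * measure M Cset)"
    using crit mean_finite_eq[OF e] by simp
  hence "e * measure M Cset < mr * measure M Cset" using e by (subst (asm) ennreal_less_iff) auto
  hence "e < mr" using pos by simp
  thus ?thesis using e by (simp add: ennreal_lessI)
qed

end

lemma lim_exp_neg_powr:
  fixes k :: real assumes k: "k > 0"
  shows "((\<lambda>x. - exp (- (x powr k))) \<longlongrightarrow> 0) at_top"
  using k by real_asymp

definition wd :: "real \<Rightarrow> real \<Rightarrow> real" where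
  "wd k x = indicator {0<..} x * (k * x powr (k - 1) * exp (- (x powr k)))"

abbreviation "Wd k \<equiv> density lborel (\<lambda>x. ennreal (wd k x))"

lemma weibull_Wd: "weibull k = distr (Wd k) borel ennreal"
  unfolding weibull_def wd_def ..

lemma wd_meas[measurable]: "wd k \<in> borel_measurable borel"
  unfolding wd_def by measurable

lemma Wd_Ici:
  assumes k: "k > 0" and a: "a > 0"
  shows "(\<integral>\<^sup>+x. ennreal (wd k x) * indicator {a..} x \<partial>lborel) = ennreal (exp (- (a powr k)))"
proof -
  have "(\<integral>\<^sup>+x. ennreal (wd k x) * indicator {a..} x \<partial>lborel)
     = (\<integral>\<^sup>+x. ennreal (k * x powr (k - 1) * exp (- (x powr k))) * indicator {a..} x \<partial>lborel)"
    using a by (intro nn_integral_cong) (auto simp: wd_def indicator_def)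
  also have "\<dots> = ennreal (0 - (- exp (- (a powr k))))"
  proof (rule nn_integral_FTC_atLeast)
    show "(\<lambda>x. k * x powr (k - 1) * exp (- (x powr k))) \<in> borel_measurable borel" by measurable
    fix x assume x: "a \<le> x"
    hence xp: "x > 0" using a by simp
    show "((\<lambda>x. - exp (- (x powr k))) has_real_derivative k * x powr (k - 1) * exp (- (x powr k))) (at x)"
      using xp by (auto intro!: derivative_eq_intros has_real_derivative_powr)
    show "0 \<le> k * x powr (k - 1) * exp (- (x powr k))" using k by simp
  qed (rule lim_exp_neg_powr[OF k])
  finally show ?thesis by simp
qed

lemma Wd_Ioi:
  assumes k: "k > 0" and a: "a > 0"
  shows "emeasure (Wd k) {a<..} = ennreal (exp (- (a powr k)))"
proof -
  have "emeasure (Wd k) {a<..} = (\<integral>\<^sup>+x. ennreal (wd k x) * indicator {a<..} x \<partial>lborel)"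
    by (subst emeasure_density) auto
  also have "\<dots> = (\<integral>\<^sup>+x. ennreal (wd k x) * indicator {a..} x \<partial>lborel)"
    by (intro nn_integral_cong_AE) (use AE_lborel_singleton[of a] in \<open>auto elim!: eventually_mono simp: indicator_def\<close>)
  finally show ?thesis using Wd_Ici[OF k a] by simp
qed

lemma Wd_nonpos: "emeasure (Wd k) {..0} = 0"
proof -
  have "(\<lambda>x. ennreal (wd k x) * indicator {..0} x) = (\<lambda>_. 0)"
    by (auto simp: fun_eq_iff wd_def indicator_def)
  thus ?thesis by (subst emeasure_density) auto
qed

definition "Wd_pos k \<longleftrightarrow> emeasure (Wd k) {0<..} = 1"

lemma Wd_pos:
  assumes k: "k > 0"
  shows "Wd_pos k"
proof -
  let ?A = "\<lambda>n::nat. {1 / real (Suc n)<..}"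
  have inc: "incseq ?A"
    by (auto simp: incseq_def frac_le intro: le_less_trans[rotated])
  have "(\<Union>n. ?A n) = {0<..}"
  proof safe
    fix x :: real assume "x > 0"
    then obtain n where "inverse (real (Suc n)) < x" using reals_Archimedean by blast
    thus "x \<in> (\<Union>n. ?A n)" by (auto simp: field_simps)
  qed (auto intro: le_less_trans[rotated])
  hence "emeasure (Wd k) {0<..} = (SUP n. emeasure (Wd k) (?A n))"
  proof -
    have "range ?A \<subseteq> sets (Wd k)" by auto
    from SUP_emeasure_incseq[OF this inc] show ?thesis using \<open>(\<Union>n. ?A n) = {0<..}\<close> by simp
  qed
  also have "\<dots> = (SUP n. ennreal (exp (- ((1 / real (Suc n)) powr k))))"
    using k by (simp add: Wd_Ioi)
  also have "\<dots> = 1"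
  proof (rule SUP_Lim)
    show "incseq (\<lambda>n. ennreal (exp (- ((1 / real (Suc n)) powr k))))"
      using k by (auto simp: incseq_def intro!: ennreal_leI powr_mono2 frac_le)
    have "(\<lambda>n. (1 / real (Suc n)) powr k) \<longlonglongrightarrow> 0"
      using k by (intro tendsto_zero_powrI LIMSEQ_Suc[OF lim_const_over_n]) auto
    hence "(\<lambda>n. exp (- ((1 / real (Suc n)) powr k))) \<longlonglongrightarrow> exp (- 0)"
      by (intro tendsto_intros)
    thus "(\<lambda>n. ennreal (exp (- ((1 / real (Suc n)) powr k)))) \<longlonglongrightarrow> 1"
      by (intro tendsto_ennrealI[where x=1, simplified]) simp
  qed
  finally have pos: "emeasure (Wd k) {0<..} = 1" .
  show ?thesis using pos unfolding Wd_pos_def by simp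
qed

lemma Wd_total:
  assumes k: "k > 0"
  shows "emeasure (Wd k) UNIV = 1"
proof -
  have pos: "emeasure (Wd k) {0<..} = 1" using Wd_pos[OF k] by (simp add: Wd_pos_def)
  have "{..0} \<union> {0<..} = (UNIV :: real set)" by auto
  hence "emeasure (Wd k) UNIV = emeasure (Wd k) ({..0} \<union> {0<..})" by simp
  also have "\<dots> = emeasure (Wd k) {..0} + emeasure (Wd k) {0<..}"
    by (intro plus_emeasure[symmetric]) auto
  finally show ?thesis using pos Wd_nonpos by simp
qed

lemma prob_Wd: "k > 0 \<Longrightarrow> prob_space (Wd k)"
  by (intro prob_spaceI) (simp add: Wd_total)

lemma weibull_law: "k > 0 \<Longrightarrow> is_law (weibull k)"
  unfolding is_law_def weibull_Wd
  by (auto intro!: prob_space.prob_space_distr prob_Wd)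

definition Sw :: "real \<Rightarrow> real \<Rightarrow> real" where
  "Sw k a = exp (- (max a 0 powr k))"

lemma Sw_meas[measurable]: "Sw k \<in> borel_measurable borel"
  unfolding Sw_def by measurable

lemma Sw_nonneg: "Sw k a \<ge> 0" by (simp add: Sw_def)

lemma weibull_U:
  assumes k: "k > 0"
  shows "emeasure (weibull k) (U a) = ennreal (Sw k a)"
proof -
  have "emeasure (weibull k) (U a) = emeasure (Wd k) {x. a < max x 0}"
  proof -
    have e: "enn2real (ennreal x) = max x 0" for x
      by (cases "x \<ge> 0") (auto simp: ennreal_neg)
    have "ennreal -` U a = {x. a < max x 0}"
      by (auto simp: U_def e)
    thus ?thesis unfolding weibull_Wd by (subst emeasure_distr) auto
  qed
  also have "\<dots> = ennreal (Sw k a)"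
  proof (cases "a > 0")
    case True
    hence "{x. a < max x 0} = {a<..}" by (auto simp: max_def)
    thus ?thesis using True k by (simp add: Wd_Ioi Sw_def)
  next
    case False
    have Sw1: "Sw k a = 1" using False k by (simp add: Sw_def max_def)
    have "1 = emeasure (Wd k) {0<..}" using Wd_pos[OF k] by (simp add: Wd_pos_def)
    also have "\<dots> \<le> emeasure (Wd k) {x. a < max x 0}"
      using False by (intro emeasure_mono) (auto simp: max_def)
    finally have "emeasure (Wd k) {x. a < max x 0} = 1"
      using prob_space.emeasure_le_1[OF prob_Wd[OF k]] by (metis antisym)
    thus ?thesis using Sw1 by simp
  qed
  finally show ?thesis .
qed

lemma powr_sum_le:
  fixes x y k :: real
  assumes "0 \<le> x" "0 \<le> y" "0 < k" "k \<le> 1"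
  shows "(x + y) powr k \<le> x powr k + y powr k"
proof (cases "x + y = 0")
  case True thus ?thesis using assms by simp
next
  case False
  define s where "s = x + y"
  have s: "s > 0" using False assms by (simp add: s_def)
  have "x / s \<le> (x / s) powr k"
    using powr_mono'[of k 1 "x/s"] assms s by (auto simp: s_def divide_le_eq_1)
  moreover have "y / s \<le> (y / s) powr k"
    using powr_mono'[of k 1 "y/s"] assms s by (auto simp: s_def divide_le_eq_1)
  ultimately have "x / s + y / s \<le> x powr k / s powr k + y powr k / s powr k"
    by (simp add: powr_divide)
  moreover have "x / s + y / s = 1" using s by (simp add: s_def add_divide_distrib[symmetric])
  ultimately have "1 \<le> (x powr k + y powr k) / s powr k" by (simp add: add_divide_distrib)
  hence "s powr k \<le> x powr k + y powr k" using s by (simp add: le_divide_eq)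
  thus ?thesis by (simp add: s_def)
qed

lemma powr_sum_ge:
  fixes x y k :: real
  assumes "0 \<le> x" "0 \<le> y" "1 \<le> k"
  shows "x powr k + y powr k \<le> (x + y) powr k"
proof (cases "x + y = 0")
  case True hence "x = 0" "y = 0" using assms by linarith+
  thus ?thesis by simp
next
  case False
  define s where "s = x + y"
  have s: "s > 0" using False assms by (simp add: s_def)
  have "(x / s) powr k \<le> x / s"
    using powr_mono'[of 1 k "x/s"] assms s by (auto simp: s_def divide_le_eq_1)
  moreover have "(y / s) powr k \<le> y / s"
    using powr_mono'[of 1 k "y/s"] assms s by (auto simp: s_def divide_le_eq_1)
  ultimately have "x powr k / s powr k + y powr k / s powr k \<le> x / s + y / s"
    by (simp add: powr_divide)
  moreover have "x / s + y / s = 1" using s by (simp add: s_def add_divide_distrib[symmetric])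
  ultimately have "(x powr k + y powr k) / s powr k \<le> 1" by (simp add: add_divide_distrib)
  hence "x powr k + y powr k \<le> s powr k" using s by (simp add: divide_le_eq)
  thus ?thesis by (simp add: s_def)
qed

lemma Sw_nwu: "0 < k \<Longrightarrow> k \<le> 1 \<Longrightarrow> 0 \<le> x \<Longrightarrow> 0 \<le> y \<Longrightarrow> Sw k x * Sw k y \<le> Sw k (x + y)"
  using powr_sum_le[of x y k] by (simp add: Sw_def exp_add[symmetric])

lemma Sw_nbu: "1 \<le> k \<Longrightarrow> 0 \<le> x \<Longrightarrow> 0 \<le> y \<Longrightarrow> Sw k (x + y) \<le> Sw k x * Sw k y"
  using powr_sum_ge[of x y k] by (simp add: Sw_def exp_add[symmetric])

lemma reset_law_eps:
  assumes R: "is_reset_law R"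
  obtains e :: real where "e > 0" "emeasure R {ennreal e<..} > 0"
proof -
  have sR: "sets R = sets borel" using R by (simp add: is_reset_law_def is_law_def)
  let ?A = "\<lambda>n::nat. {ennreal (1 / real (Suc n))<..}"
  have "(\<Union>n. ?A n) = {0<..}"
  proof safe
    fix x :: ennreal assume "x > 0"
    show "x \<in> (\<Union>n. ?A n)"
    proof (cases "x = top")
      case True thus ?thesis by auto
    next
      case False
      then obtain y where y: "x = ennreal y" "y > 0" using \<open>x > 0\<close>
        by (metis ennreal_cases ennreal_less_zero_iff top.not_eq_extremum)
      then obtain n where n: "inverse (real (Suc n)) < y" using reals_Archimedean by blast
      have "ennreal (1 / real (Suc n)) < ennreal y" using n y by (intro ennreal_lessI) (auto simp: field_simps)
      thus ?thesis using y by auto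
    qed
  qed (auto intro: le_less_trans[OF zero_le])
  moreover have "emeasure R {0<..} > 0" using R by (simp add: is_reset_law_def)
  ultimately have "emeasure R (\<Union>n. ?A n) \<noteq> 0" by simp
  have "\<exists>n. emeasure R (?A n) \<noteq> 0"
  proof (rule ccontr)
    assume "\<not> (\<exists>n. emeasure R (?A n) \<noteq> 0)"
    hence "emeasure R (\<Union>n. ?A n) = 0" by (intro emeasure_UN_eq_0) (auto simp: sR)
    thus False using \<open>emeasure R (\<Union>n. ?A n) \<noteq> 0\<close> by simp
  qed
  then obtain n where "emeasure R (?A n) \<noteq> 0" by auto
  thus ?thesis using that[of "1 / real (Suc n)"] by (simp add: zero_less_iff_neq_zero)
qed

lemma weib_pos:
  assumes k: "k > 0" and RR: "is_reset_law R"
  shows "emeasure (weibull k \<Otimes>\<^sub>M R) {s\<in>space (weibull k \<Otimes>\<^sub>M R). fst s \<le> snd s} > 0"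
proof -
  have RL: "is_law R" using RR by (simp add: is_reset_law_def)
  interpret reset_setting "weibull k" R using weibull_law[OF k] RL by unfold_locales
  obtain e where e: "e > 0" "emeasure R {ennreal e<..} > 0" using reset_law_eps[OF RR] by blast
  have sub: "{t. t \<le> ennreal e} \<times> {ennreal e<..} \<subseteq> {s\<in>space M. fst s \<le> snd s}"
    by (auto simp: space_pair_measure sets_eq_imp_space_eq[OF sT] sets_eq_imp_space_eq[OF sR])
  have Tpos: "emeasure (weibull k) {t. t \<le> ennreal e} > 0"
  proof -
    have "{t. t \<le> ennreal e} = space (weibull k) - U e"
      using e by (auto simp: U_ennreal sets_eq_imp_space_eq[OF sT])
    hence m1: "measure (weibull k) {t. t \<le> ennreal e} = 1 - measure (weibull k) (U e)"
      using T.prob_compl[of "U e"] by (simp add: sT)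
    have m2: "measure (weibull k) (U e) = Sw k e"
      using weibull_U[OF k, of e] by (simp add: T.emeasure_eq_measure Sw_nonneg)
    have m3: "Sw k e < 1" using e k by (simp add: Sw_def)
    have "measure (weibull k) {t. t \<le> ennreal e} > 0" using m1 m2 m3 by simp
    thus ?thesis by (simp add: T.emeasure_eq_measure)
  qed
  have "0 < emeasure (weibull k) {t. t \<le> ennreal e} * emeasure R {ennreal e<..}"
    using Tpos e by (simp add: ennreal_zero_less_mult_iff)
  also have "\<dots> = emeasure M ({t. t \<le> ennreal e} \<times> {ennreal e<..})"
    by (subst R.emeasure_pair_measure_Times) (auto simp: sT sR)
  also have "\<dots> \<le> emeasure M {s\<in>space M. fst s \<le> snd s}"
    by (intro emeasure_mono sub) measurable
  finally show ?thesis .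
qed

lemma weib_stoch_le:
  assumes k: "k > 0" "k \<le> 1" and RR: "is_reset_law R"
  shows "stoch_le (reset_transform (weibull k) R) (weibull k)"
proof -
  have RL: "is_law R" using RR by (simp add: is_reset_law_def)
  interpret reset_setting "weibull k" R using weibull_law[OF k(1)] RL by unfold_locales
  show ?thesis unfolding stoch_le_U
    using tail_le_T[OF weibull_U[OF k(1)] Sw_nonneg Sw_meas Sw_nwu[OF k] weib_pos[OF k(1) RR]] by auto
qed

lemma weib_stoch_ge:
  assumes k: "k \<ge> 1" and RR: "is_reset_law R"
  shows "stoch_le (weibull k) (reset_transform (weibull k) R)"
proof -
  have k0: "k > 0" using k by simp
  have RL: "is_law R" using RR by (simp add: is_reset_law_def)
  interpret reset_setting "weibull k" R using weibull_law[OF k0] RL by unfold_locales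
  show ?thesis unfolding stoch_le_U
    using T_le_tail[OF weibull_U[OF k0] Sw_nonneg Sw_meas Sw_nbu[OF k] weib_pos[OF k0 RR]] by auto
qed

lemma exp_powr_bound:
  fixes k t :: real assumes k: "k > 0" and t: "t > 0"
  shows "exp (- (t powr k)) \<le> (2 / k) powr (2 / k) / t ^ 2"
proof -
  have z: "(k/2) * t powr k \<le> exp ((k/2) * t powr k)"
    using exp_ge_add_one_self[of "(k/2) * t powr k"] by linarith
  have "((k/2) * t powr k) powr (2/k) \<le> exp ((k/2) * t powr k) powr (2/k)"
    using k t z by (intro powr_mono2) auto
  also have "exp ((k/2) * t powr k) powr (2/k) = exp (t powr k)"
  proof -
    have "exp ((k/2) * t powr k) powr (2/k) = exp ((2/k) * ((k/2) * t powr k))"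
      by (simp add: powr_def)
    also have "(2/k) * ((k/2) * t powr k) = t powr k" using k by simp
    finally show ?thesis .
  qed
  also have "((k/2) * t powr k) powr (2/k) = (k/2) powr (2/k) * t ^ 2"
  proof -
    have "((k/2) * t powr k) powr (2/k) = (k/2) powr (2/k) * (t powr k) powr (2/k)"
      using powr_mult[of "k/2" "t powr k" "2/k"] k t by simp
    also have "(t powr k) powr (2/k) = t powr (k * (2/k))" by (rule powr_powr)
    also have "k * (2/k) = real 2" using k by simp
    also have "t powr real 2 = t ^ 2" using t by (rule powr_realpow)
    finally show ?thesis .
  qed
  finally have *: "(k/2) powr (2/k) * t ^ 2 \<le> exp (t powr k)" .
  have "exp (- (t powr k)) = 1 / exp (t powr k)" by (simp add: exp_minus field_simps)
  also have "\<dots> \<le> 1 / ((k/2) powr (2/k) * t ^ 2)"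
    using * k t by (intro divide_left_mono) auto
  also have "\<dots> = (2 / k) powr (2 / k) / t ^ 2"
    using k t by (simp add: powr_divide field_simps)
  finally show ?thesis .
qed

lemma int_inv_sq: "(\<integral>\<^sup>+t. ennreal (1 / t ^ 2) * indicator {1..} t \<partial>lborel) = 1"
proof -
  have "(\<integral>\<^sup>+t. ennreal (1 / t ^ 2) * indicator {1..} t \<partial>lborel) = ennreal (0 - (- 1 / 1))"
  proof (rule nn_integral_FTC_atLeast[where F="\<lambda>t. - 1 / t"])
    show "(\<lambda>t::real. 1 / t ^ 2) \<in> borel_measurable borel" by measurable
    fix x :: real assume x: "1 \<le> x"
    show "((\<lambda>t. - 1 / t) has_real_derivative 1 / x ^ 2) (at x)"
      using x by (auto intro!: derivative_eq_intros simp: power2_eq_square)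
    show "0 \<le> 1 / x ^ 2" by simp
  next
    show "((\<lambda>t::real. - 1 / t) \<longlongrightarrow> 0) at_top" by real_asymp
  qed
  thus ?thesis by simp
qed

definition "Bk k = 1 + (2 / k) powr (2 / k)"

lemma mean_weibull_tail:
  assumes k: "k > 0"
  shows "mean (weibull k) = (\<integral>\<^sup>+t. ennreal (Sw k t) * indicator {0..} t \<partial>lborel)"
  using mean_tail[OF weibull_law[OF k]] weibull_U[OF k] by simp

lemma mean_weibull_ge:
  assumes k: "k > 0"
  shows "ennreal (exp (-1)) \<le> mean (weibull k)"
proof -
  have "ennreal (exp (-1)) = ennreal (exp (-1)) * emeasure lborel {0::real..1}" by simp
  also have "\<dots> = (\<integral>\<^sup>+t. ennreal (exp (-1)) * indicator {0::real..1} t \<partial>lborel)"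
    by (rule nn_integral_cmult_indicator[symmetric]) simp
  also have "\<dots> \<le> (\<integral>\<^sup>+t. ennreal (Sw k t) * indicator {0..} t \<partial>lborel)"
  proof (intro nn_integral_mono)
    fix t :: real
    show "ennreal (exp (-1)) * indicator {0..1} t \<le> ennreal (Sw k t) * indicator {0..} t"
    proof (cases "t \<in> {0..1}")
      case True
      hence "t powr k \<le> 1" using k by (intro powr_le1) auto
      hence "exp (-1) \<le> Sw k t" using True by (simp add: Sw_def max_def)
      thus ?thesis using True by (auto simp: indicator_def intro: ennreal_leI)
    qed (simp add: indicator_def)
  qed
  finally show ?thesis using mean_weibull_tail[OF k] by simp
qed

lemma mean_weibull_le:
  assumes k: "k > 0"
  shows "mean (weibull k) \<le> ennreal (Bk k)"
proof -
  let ?C = "(2 / k) powr (2 / k)"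
  have "(\<integral>\<^sup>+t. ennreal (Sw k t) * indicator {0..} t \<partial>lborel)
     \<le> (\<integral>\<^sup>+t. indicator {0..1} t + ennreal ?C * (ennreal (1 / t ^ 2) * indicator {1..} t) \<partial>lborel)"
  proof (intro nn_integral_mono)
    fix t :: real
    show "ennreal (Sw k t) * indicator {0..} t \<le> indicator {0..1} t + ennreal ?C * (ennreal (1 / t ^ 2) * indicator {1..} t)"
    proof (cases "t \<le> 1")
      case True
      have "Sw k t \<le> 1" by (simp add: Sw_def)
      hence "ennreal (Sw k t) * indicator {0..} t \<le> indicator {0..1} t"
        using True by (auto simp: indicator_def intro: ennreal_leI)
      also have "\<dots> \<le> indicator {0..1} t + ennreal ?C * (ennreal (1 / t ^ 2) * indicator {1..} t)"
        by (rule add_increasing2) auto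
      finally show ?thesis .
    next
      case False
      hence "Sw k t \<le> ?C / t ^ 2" using exp_powr_bound[OF k, of t] by (simp add: Sw_def max_def)
      hence "ennreal (Sw k t) \<le> ennreal ?C * ennreal (1 / t ^ 2)"
        by (simp add: ennreal_mult'[symmetric] ennreal_leI)
      thus ?thesis using False by (auto simp: indicator_def)
    qed
  qed
  also have "\<dots> = 1 + ennreal ?C * 1"
    by (subst nn_integral_add) (auto simp: nn_integral_cmult int_inv_sq)
  also have "\<dots> = ennreal (Bk k)" by (simp add: Bk_def ennreal_plus)
  finally show ?thesis using mean_weibull_tail[OF k] by simp
qed

lemma one_minus_exp_le: "(y::real) \<ge> 0 \<Longrightarrow> 1 - exp (- y) \<le> y"
  using exp_ge_add_one_self[of "-y"] by simp

lemma one_minus_exp_ge: assumes "(y::real) \<ge> 0" "y \<le> 1" shows "y / 2 \<le> 1 - exp (- y)"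
proof -
  have "1 + y \<le> exp y" using exp_ge_add_one_self[of y] by simp
  hence "exp (- y) \<le> 1 / (1 + y)" using assms by (simp add: exp_minus field_simps)
  moreover have "y / 2 \<le> 1 - 1 / (1 + y)"
  proof -
    have "y * y \<le> y * 1" using assms by (intro mult_left_mono) auto
    thus ?thesis using assms by (simp add: field_simps)
  qed
  ultimately show ?thesis by simp
qed

lemma dirac_reset: "r > 0 \<Longrightarrow> is_reset_law (dirac_law r)"
  unfolding is_reset_law_def is_law_def dirac_law_def
  by (auto intro!: prob_space_return simp: emeasure_return)

lemma Bk_ge1: "(k::real) > 0 \<Longrightarrow> Bk k \<ge> 1"
  by (simp add: Bk_def)

context
  fixes k \<rho> :: real
  assumes k: "k > 0" and \<rho>: "\<rho> > 0"
begin

interpretation reset_setting "weibull k" "dirac_law \<rho>"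
  using weibull_law[OF k] dirac_reset[OF \<rho>] by unfold_locales (auto simp: is_reset_law_def)

lemma dirac_q: "measure M Cset = 1 - Sw k \<rho>"
proof -
  have "emeasure M Cset = (\<integral>\<^sup>+t. emeasure (dirac_law \<rho>) (Pair t -` Cset) \<partial>weibull k)"
    by (rule R.emeasure_pair_measure_alt) measurable
  also have "\<dots> = (\<integral>\<^sup>+t. indicator {t. t \<le> ennreal \<rho>} t \<partial>weibull k)"
  proof (intro nn_integral_cong)
    fix t assume t: "t \<in> space (weibull k)"
    have "Pair t -` Cset = {r. t \<le> r}"
      using t by (auto simp: space_pair_measure sets_eq_imp_space_eq[OF sR] sets_eq_imp_space_eq[OF sT])
    thus "emeasure (dirac_law \<rho>) (Pair t -` Cset) = indicator {t. t \<le> ennreal \<rho>} t"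
      by (simp add: dirac_law_def emeasure_return indicator_def)
  qed
  also have "\<dots> = emeasure (weibull k) {t. t \<le> ennreal \<rho>}"
    by (simp add: sT)
  also have "{t. t \<le> ennreal \<rho>} = space (weibull k) - U \<rho>"
    using \<rho> by (auto simp: U_ennreal sets_eq_imp_space_eq[OF sT])
  finally have "measure M Cset = measure (weibull k) (space (weibull k) - U \<rho>)"
    by (simp add: TR.emeasure_eq_measure T.emeasure_eq_measure)
  also have "\<dots> = 1 - measure (weibull k) (U \<rho>)" by (rule T.prob_compl) (simp add: sT)
  also have "measure (weibull k) (U \<rho>) = Sw k \<rho>"
    using weibull_U[OF k, of \<rho>] by (simp add: T.emeasure_eq_measure Sw_nonneg)
  finally show ?thesis .
qed

lemma dirac_Em: "Em = (\<integral>\<^sup>+t. min t (ennreal \<rho>) \<partial>weibull k)"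
proof -
  have "Em = (\<integral>\<^sup>+t. \<integral>\<^sup>+r. min t r \<partial>dirac_law \<rho> \<partial>weibull k)"
    by (subst R.nn_integral_fst[symmetric]) (auto simp: case_prod_beta)
  also have "\<dots> = (\<integral>\<^sup>+t. min t (ennreal \<rho>) \<partial>weibull k)"
    by (intro nn_integral_cong) (simp add: dirac_law_def nn_integral_return)
  finally show ?thesis .
qed

lemma powr_split: "\<rho> powr k = \<rho> powr (k - 1) * \<rho>"
proof -
  have "\<rho> powr k = \<rho> powr ((k - 1) + 1)" by simp
  also have "\<dots> = \<rho> powr (k - 1) * \<rho> powr 1" by (rule powr_add)
  finally show ?thesis using \<rho> by simp
qed

lemma dirac_gt:
  assumes k1: "k > 1" and r1: "\<rho> powr (k - 1) = 1 / (6 * Bk k)" and rle: "\<rho> \<le> 1"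
  shows "mean (weibull k) < mean \<nu>"
proof -
  define B where "B = Bk k"
  have B1: "B \<ge> 1" using Bk_ge1[OF k] by (simp add: B_def)
  have rk: "\<rho> powr k = \<rho> / (6 * B)" using powr_split r1 by (simp add: B_def)
  have rk1: "\<rho> powr k \<le> 1" using rle \<rho> k by (intro powr_le1) auto
  have q: "measure M Cset = 1 - exp (- (\<rho> powr k))" using dirac_q \<rho> by (simp add: Sw_def)
  have qpos: "measure M Cset > 0" using q \<rho> by simp
  have qle: "measure M Cset \<le> \<rho> / (6 * B)" using q one_minus_exp_le[of "\<rho> powr k"] rk B1 \<rho> by simp
  have e6: "1 / 6 < exp (-1::real)"
    using exp_le by (simp add: exp_minus field_simps)
  have "Em \<ge> (\<integral>\<^sup>+t. ennreal \<rho> * indicator (U \<rho>) t \<partial>weibull k)"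
    unfolding dirac_Em
  proof (intro nn_integral_mono)
    fix t show "ennreal \<rho> * indicator (U \<rho>) t \<le> min t (ennreal \<rho>)"
      using \<rho> by (auto simp: indicator_def U_ennreal)
  qed
  also have "(\<integral>\<^sup>+t. ennreal \<rho> * indicator (U \<rho>) t \<partial>weibull k) = ennreal (\<rho> * Sw k \<rho>)"
    using weibull_U[OF k, of \<rho>] \<rho> by (simp add: nn_integral_cmult_indicator sT ennreal_mult' Sw_nonneg)
  finally have Em1: "ennreal (\<rho> * Sw k \<rho>) \<le> Em" .
  have "B * measure M Cset \<le> B * (\<rho> / (6 * B))" using qle B1 by (intro mult_left_mono) auto
  also have "\<dots> = \<rho> * (1/6)" using B1 by simp
  also have "\<dots> < \<rho> * exp (-1)" using e6 \<rho> by simp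
  also have "\<dots> \<le> \<rho> * Sw k \<rho>" using rk1 \<rho> by (intro mult_left_mono) (auto simp: Sw_def max_def)
  finally have "ennreal (B * measure M Cset) < ennreal (\<rho> * Sw k \<rho>)"
    using \<rho> by (intro ennreal_lessI) (auto simp: Sw_def)
  hence "ennreal (B * measure M Cset) < Em" using Em1 by (rule less_le_trans)
  hence "ennreal B < mean \<nu>" using B1 qpos by (intro mean_gt_crit) auto
  moreover have "mean (weibull k) \<le> ennreal B" using mean_weibull_le[OF k] by (simp add: B_def)
  ultimately show ?thesis by simp
qed

lemma dirac_lt:
  assumes k1: "k < 1" and r1: "\<rho> powr (1 - k) = 1 / 10" and rle: "\<rho> \<le> 1"
  shows "mean \<nu> < mean (weibull k)"
proof -
  have rk: "\<rho> = \<rho> powr k / 10"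
  proof -
    have "\<rho> = \<rho> powr (k + (1 - k))" using \<rho> by simp
    also have "\<dots> = \<rho> powr k * \<rho> powr (1 - k)" by (rule powr_add)
    finally show ?thesis using r1 by simp
  qed
  have rk1: "\<rho> powr k \<le> 1" using rle \<rho> k by (intro powr_le1) auto
  have q: "measure M Cset = 1 - exp (- (\<rho> powr k))" using dirac_q \<rho> by (simp add: Sw_def)
  have qpos: "measure M Cset > 0" using q \<rho> by simp
  have qge: "\<rho> powr k / 2 \<le> measure M Cset" using q one_minus_exp_ge[of "\<rho> powr k"] rk1 by simp
  have e5: "1 / 5 < exp (-1::real)"
    using exp_le by (simp add: exp_minus field_simps)
  have "Em \<le> (\<integral>\<^sup>+t. ennreal \<rho> \<partial>weibull k)"
    unfolding dirac_Em by (intro nn_integral_mono) simp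
  also have "\<dots> = ennreal \<rho>" by (simp add: T.emeasure_space_1)
  also have "\<rho> < exp (-1) * measure M Cset"
  proof -
    have "\<rho> = \<rho> powr k / 2 * (1/5)" using rk by simp
    also have "\<dots> < \<rho> powr k / 2 * exp (-1)" using e5 \<rho> by (intro mult_strict_left_mono) auto
    also have "\<dots> \<le> measure M Cset * exp (-1)" using qge by (intro mult_right_mono) auto
    finally show ?thesis by (simp add: mult.commute)
  qed
  hence "ennreal \<rho> < ennreal (exp (-1) * measure M Cset)" using \<rho> by (intro ennreal_lessI) auto
  finally have crit: "Em < ennreal (exp (-1) * measure M Cset)" .
  have "mean \<nu> \<le> mean (weibull k)"
    using stoch_le_mean[OF nu_law weibull_law[OF k] weib_stoch_le[OF k _ dirac_reset[OF \<rho>]]] k1 by simp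
  also have "\<dots> \<le> ennreal (Bk k)" by (rule mean_weibull_le[OF k])
  finally have fin: "mean \<nu> < \<infinity>" by (simp add: le_less_trans)
  have "mean \<nu> < ennreal (exp (-1))" by (rule mean_lt_crit[OF qpos fin crit])
  also have "\<dots> \<le> mean (weibull k)" by (rule mean_weibull_ge[OF k])
  finally show ?thesis .
qed

end

lemma dirac_fail_gt:
  assumes k: "k > 1"
  shows "\<exists>\<rho>>0. mean (weibull k) < mean (reset_transform (weibull k) (dirac_law \<rho>))"
proof -
  define c where "c = 1 / (6 * Bk k)"
  have B1: "Bk k \<ge> 1" using Bk_ge1 k by simp
  have c: "0 < c" "c \<le> 1" using B1 by (auto simp: c_def field_simps)
  define \<rho> where "\<rho> = c powr (1 / (k - 1))"
  have rp: "\<rho> > 0" using c by (simp add: \<rho>_def)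
  have rle: "\<rho> \<le> 1" using c k by (simp add: \<rho>_def powr_le1)
  have "\<rho> powr (k - 1) = c" using c k by (simp add: \<rho>_def powr_powr)
  hence "\<rho> powr (k - 1) = 1 / (6 * Bk k)" by (simp add: c_def)
  thus ?thesis using dirac_gt[of k \<rho>] k rp rle by auto
qed

lemma dirac_fail_lt:
  assumes k: "0 < k" "k < 1"
  shows "\<exists>\<rho>>0. mean (reset_transform (weibull k) (dirac_law \<rho>)) < mean (weibull k)"
proof -
  define \<rho> where "\<rho> = (1/10) powr (1 / (1 - k))"
  have rp: "\<rho> > 0" by (simp add: \<rho>_def)
  have rle: "\<rho> \<le> 1" using k by (simp add: \<rho>_def powr_le1)
  have "\<rho> powr (1 - k) = 1/10" using k by (simp add: \<rho>_def powr_powr)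
  thus ?thesis using dirac_lt[of k \<rho>] k rp rle by auto
qed

abbreviation "Ed \<mu> \<equiv> density lborel (exponential_density \<mu>)"

lemma expd_meas[measurable]: "exponential_density \<mu> \<in> borel_measurable borel"
  unfolding exponential_density_def by measurable

lemma exp_law_Ed: "exp_law \<mu> = distr (Ed \<mu>) borel ennreal"
  unfolding exp_law_def ..

lemma Ed_Ici:
  assumes mu: "\<mu> > 0" and a: "a \<ge> 0"
  shows "(\<integral>\<^sup>+x. ennreal (exponential_density \<mu> x) * indicator {a..} x \<partial>lborel) = ennreal (exp (- a * \<mu>))"
proof -
  have "(\<integral>\<^sup>+x. ennreal (exponential_density \<mu> x) * indicator {a..} x \<partial>lborel)
     = (\<integral>\<^sup>+x. ennreal (\<mu> * exp (- x * \<mu>)) * indicator {a..} x \<partial>lborel)"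
    using a by (intro nn_integral_cong) (auto simp: exponential_density_def indicator_def)
  also have "\<dots> = ennreal (0 - (- exp (- a * \<mu>)))"
  proof (rule nn_integral_FTC_atLeast[where F="\<lambda>x. - exp (- x * \<mu>)"])
    show "(\<lambda>x. \<mu> * exp (- x * \<mu>)) \<in> borel_measurable borel" by measurable
    fix x assume x: "a \<le> x"
    show "((\<lambda>x. - exp (- x * \<mu>)) has_real_derivative \<mu> * exp (- x * \<mu>)) (at x)"
      by (auto intro!: derivative_eq_intros)
    show "0 \<le> \<mu> * exp (- x * \<mu>)" using mu by simp
  next
    show "((\<lambda>x. - exp (- x * \<mu>)) \<longlongrightarrow> 0) at_top" using mu by real_asymp
  qed
  finally show ?thesis by simp
qed

lemma Ed_Ioi:
  assumes mu: "\<mu> > 0" and a: "a \<ge> 0"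
  shows "emeasure (Ed \<mu>) {a<..} = ennreal (exp (- a * \<mu>))"
proof -
  have "emeasure (Ed \<mu>) {a<..} = (\<integral>\<^sup>+x. ennreal (exponential_density \<mu> x) * indicator {a<..} x \<partial>lborel)"
    by (subst emeasure_density) auto
  also have "\<dots> = (\<integral>\<^sup>+x. ennreal (exponential_density \<mu> x) * indicator {a..} x \<partial>lborel)"
    by (intro nn_integral_cong_AE) (use AE_lborel_singleton[of a] in \<open>auto elim!: eventually_mono simp: indicator_def\<close>)
  finally show ?thesis using Ed_Ici[OF mu a] by simp
qed

lemma exp_law_law: "\<mu> > 0 \<Longrightarrow> is_law (exp_law \<mu>)"
  unfolding is_law_def exp_law_Ed
  by (auto intro!: prob_space.prob_space_distr prob_space_exponential_density)

lemma exp_law_U: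
  assumes mu: "\<mu> > 0"
  shows "emeasure (exp_law \<mu>) (U a) = ennreal (exp (- max a 0 * \<mu>))"
proof -
  have e: "enn2real (ennreal x) = max x 0" for x
    by (cases "x \<ge> 0") (auto simp: ennreal_neg)
  have pre: "ennreal -` U a = {x. a < max x 0}" by (auto simp: U_def e)
  show ?thesis
  proof (cases "a \<ge> 0")
    case True
    hence "{x. a < max x 0} = {a<..}" by (auto simp: max_def)
    thus ?thesis using True mu pre unfolding exp_law_Ed by (subst emeasure_distr) (auto simp: Ed_Ioi)
  next
    case False
    hence "{x. a < max x 0} = UNIV" by (auto simp: max_def)
    hence "emeasure (exp_law \<mu>) (U a) = emeasure (Ed \<mu>) (space (Ed \<mu>))"
      using pre unfolding exp_law_Ed by (subst emeasure_distr) auto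
    also have "\<dots> = 1" using prob_space.emeasure_space_1[OF prob_space_exponential_density[OF mu]] .
    finally show ?thesis using False by simp
  qed
qed

lemma exp_reset: "\<mu> > 0 \<Longrightarrow> is_reset_law (exp_law \<mu>)"
proof -
  assume mu: "\<mu> > 0"
  have "{0<..} = U 0" using U_ennreal[of 0] by simp
  hence a: "emeasure (exp_law \<mu>) {0<..} = 1" using exp_law_U[OF mu, of 0] by simp
  have "ennreal -` {..<\<infinity>} = UNIV" by auto
  hence b: "emeasure (exp_law \<mu>) {..<\<infinity>} = 1"
    unfolding exp_law_Ed
    using prob_space.emeasure_space_1[OF prob_space_exponential_density[OF mu]]
    by (subst emeasure_distr) auto
  show ?thesis unfolding is_reset_law_def using a b exp_law_law[OF mu] by simp
qed

lemma exp_mean: assumes mu: "\<mu> > 0" shows "mean (exp_law \<mu>) = ennreal (1 / \<mu>)"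
proof -
  have "mean (exp_law \<mu>) = (\<integral>\<^sup>+ t. ennreal (exp (- max t 0 * \<mu>)) * indicator {0..} t \<partial>lborel)"
    using mean_tail[OF exp_law_law[OF mu]] exp_law_U[OF mu] by simp
  also have "\<dots> = (\<integral>\<^sup>+ t. ennreal (exp (- t * \<mu>)) * indicator {0..} t \<partial>lborel)"
    by (intro nn_integral_cong) (auto simp: indicator_def max_def)
  also have "\<dots> = ennreal (0 - (- exp (- 0 * \<mu>) / \<mu>))"
  proof (rule nn_integral_FTC_atLeast[where F="\<lambda>x. - exp (- x * \<mu>) / \<mu>"])
    show "(\<lambda>x. exp (- x * \<mu>)) \<in> borel_measurable borel" by measurable
    fix x :: real assume x: "0 \<le> x"
    show "((\<lambda>x. - exp (- x * \<mu>) / \<mu>) has_real_derivative exp (- x * \<mu>)) (at x)"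
      using mu by (auto intro!: derivative_eq_intros)
    show "0 \<le> exp (- x * \<mu>)" by simp
  next
    show "((\<lambda>x. - exp (- x * \<mu>) / \<mu>) \<longlongrightarrow> 0) at_top" using mu by real_asymp
  qed
  finally show ?thesis by simp
qed

lemma exp_law_integral:
  assumes mu: "\<mu> > 0" and g[measurable]: "g \<in> borel_measurable borel"
  shows "(\<integral>\<^sup>+r. g r \<partial>exp_law \<mu>) = (\<integral>\<^sup>+x. ennreal (exponential_density \<mu> x) * g (ennreal x) \<partial>lborel)"
  unfolding exp_law_Ed
  by (subst nn_integral_distr) (auto simp: nn_integral_density)

lemma weib_le:
  assumes k: "k > 0" and r: "\<rho> \<ge> 0"
  shows "emeasure (weibull k) {t. t \<le> ennreal \<rho>} = ennreal (1 - Sw k \<rho>)"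
proof -
  interpret T: prob_space "weibull k" using weibull_law[OF k] by (simp add: is_law_def)
  have sT: "sets (weibull k) = sets borel" using weibull_law[OF k] by (simp add: is_law_def)
  have "{t. t \<le> ennreal \<rho>} = space (weibull k) - U \<rho>"
    using r by (auto simp: U_ennreal sets_eq_imp_space_eq[OF sT])
  hence "measure (weibull k) {t. t \<le> ennreal \<rho>} = 1 - measure (weibull k) (U \<rho>)"
    using T.prob_compl[of "U \<rho>"] by (simp add: sT)
  also have "measure (weibull k) (U \<rho>) = Sw k \<rho>"
    using weibull_U[OF k, of \<rho>] by (simp add: T.emeasure_eq_measure Sw_nonneg)
  finally show ?thesis by (simp add: T.emeasure_eq_measure)
qed

lemma int_exp_half:
  assumes mu: "\<mu> > 0"
  shows "(\<integral>\<^sup>+x. ennreal (\<mu> * exp (- x * \<mu> / 2)) * indicator {0..} x \<partial>lborel) = 2"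
proof -
  have "(\<integral>\<^sup>+x. ennreal (\<mu> * exp (- x * \<mu> / 2)) * indicator {0..} x \<partial>lborel) = ennreal (0 - (- 2 * exp (- 0 * \<mu> / 2)))"
  proof (rule nn_integral_FTC_atLeast[where F="\<lambda>x. - 2 * exp (- x * \<mu> / 2)"])
    show "(\<lambda>x. \<mu> * exp (- x * \<mu> / 2)) \<in> borel_measurable borel" by measurable
    fix x :: real assume x: "0 \<le> x"
    show "((\<lambda>x. - 2 * exp (- x * \<mu> / 2)) has_real_derivative \<mu> * exp (- x * \<mu> / 2)) (at x)"
      by (auto intro!: derivative_eq_intros)
    show "0 \<le> \<mu> * exp (- x * \<mu> / 2)" using mu by simp
  next
    show "((\<lambda>x. - 2 * exp (- x * \<mu> / 2)) \<longlongrightarrow> 0) at_top" using mu by real_asymp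
  qed
  thus ?thesis by simp
qed

lemma powr_exp_bound:
  fixes k \<mu> x :: real
  assumes k: "k > 0" and mu: "\<mu> > 0" and x: "x \<ge> 0"
  shows "x powr k \<le> (2 * k / \<mu>) powr k * exp (\<mu> * x / 2)"
proof -
  have y: "\<mu> * x / (2 * k) \<le> exp (\<mu> * x / (2 * k))"
    using exp_ge_add_one_self[of "\<mu> * x / (2 * k)"] by linarith
  have "x = (2 * k / \<mu>) * (\<mu> * x / (2 * k))" using k mu by (simp add: field_simps)
  hence "x powr k = (2 * k / \<mu>) powr k * (\<mu> * x / (2 * k)) powr k"
    using k mu x by (metis powr_mult divide_nonneg_pos mult_nonneg_nonneg less_imp_le zero_le_numeral mult_pos_pos zero_less_numeral)
  also have "\<dots> \<le> (2 * k / \<mu>) powr k * exp (\<mu> * x / (2 * k)) powr k"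
    using y k mu x by (intro mult_left_mono powr_mono2) auto
  also have "exp (\<mu> * x / (2 * k)) powr k = exp (\<mu> * x / 2)"
    using k by (simp add: powr_def)
  finally show ?thesis .
qed

context
  fixes k \<mu> :: real
  assumes k: "k > 0" and mu: "\<mu> > 0"
begin

interpretation reset_setting "weibull k" "exp_law \<mu>"
  using weibull_law[OF k] exp_law_law[OF mu] by unfold_locales auto

lemma exp_Em_ge:
  assumes b: "b \<ge> 0"
  shows "ennreal (b * Sw k b * exp (- b * \<mu>)) \<le> Em"
proof -
  have "ennreal (b * Sw k b * exp (- b * \<mu>)) = ennreal b * emeasure M (U b \<times> U b)"
    using b by (simp add: R.emeasure_pair_measure_Times sT sR weibull_U[OF k] exp_law_U[OF mu]
        ennreal_mult'[symmetric] Sw_nonneg mult.assoc)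
  also have "\<dots> = (\<integral>\<^sup>+s. ennreal b * indicator (U b \<times> U b) s \<partial>M)"
    by (rule nn_integral_cmult_indicator[symmetric]) (simp add: sT sR)
  also have "\<dots> \<le> Em"
  proof (intro nn_integral_mono)
    fix s :: "ennreal \<times> ennreal"
    show "ennreal b * indicator (U b \<times> U b) s \<le> min (fst s) (snd s)"
      using b by (cases s) (auto simp: indicator_def U_ennreal)
  qed
  finally show ?thesis .
qed

lemma exp_q_ge:
  assumes b: "b \<ge> 0"
  shows "(1 - Sw k b) * exp (- b * \<mu>) \<le> measure M Cset"
proof -
  have "ennreal ((1 - Sw k b) * exp (- b * \<mu>)) = emeasure M ({t. t \<le> ennreal b} \<times> U b)"
  proof -
    have "1 - Sw k b \<ge> 0" by (simp add: Sw_def)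
    thus ?thesis using b
      by (simp add: R.emeasure_pair_measure_Times sT sR weib_le[OF k] exp_law_U[OF mu] ennreal_mult'[symmetric])
  qed
  also have "\<dots> \<le> emeasure M Cset"
    by (intro emeasure_mono[OF _ Cset_sets]) (use b in \<open>auto simp: U_ennreal space_pair_measure sets_eq_imp_space_eq[OF sT] sets_eq_imp_space_eq[OF sR]\<close>)
  finally show ?thesis by (simp add: TR.emeasure_eq_measure)
qed

lemma exp_Em_le: "Em \<le> ennreal (1 / \<mu>)"
proof -
  have "Em \<le> (\<integral>\<^sup>+s. snd s \<partial>M)" by (intro nn_integral_mono) simp
  also have "\<dots> = (\<integral>\<^sup>+r. \<integral>\<^sup>+t. r \<partial>weibull k \<partial>exp_law \<mu>)"
    by (subst TR.nn_integral_snd[symmetric]) auto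
  also have "\<dots> = mean (exp_law \<mu>)" by (simp add: T.emeasure_space_1 mean_def)
  finally show ?thesis using exp_mean[OF mu] by simp
qed

lemma exp_q_le: "measure M Cset \<le> 2 * (2 * k / \<mu>) powr k"
proof -
  let ?C = "(2 * k / \<mu>) powr k"
  have "emeasure M Cset = (\<integral>\<^sup>+y. emeasure (weibull k) ((\<lambda>x. (x, y)) -` Cset) \<partial>exp_law \<mu>)"
    by (rule TR.emeasure_pair_measure_alt2) measurable
  also have "\<dots> = (\<integral>\<^sup>+y. emeasure (weibull k) {x. x \<le> y} \<partial>exp_law \<mu>)"
  proof (intro nn_integral_cong)
    fix y assume "y \<in> space (exp_law \<mu>)"
    have "(\<lambda>x. (x, y)) -` Cset = {x. x \<le> y}"
      by (auto simp: space_pair_measure sets_eq_imp_space_eq[OF sT] sets_eq_imp_space_eq[OF sR])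
    thus "emeasure (weibull k) ((\<lambda>x. (x, y)) -` Cset) = emeasure (weibull k) {x. x \<le> y}" by simp
  qed
  also have "\<dots> = (\<integral>\<^sup>+x. ennreal (exponential_density \<mu> x) * emeasure (weibull k) {t. t \<le> ennreal x} \<partial>lborel)"
  proof (rule exp_law_integral[OF mu])
    have "(\<lambda>y. \<integral>\<^sup>+x. (if x \<le> y then 1 else 0) \<partial>weibull k) \<in> borel_measurable borel"
      by (rule T.borel_measurable_nn_integral) measurable
    moreover have "(\<lambda>y. \<integral>\<^sup>+x. (if x \<le> y then 1 else 0) \<partial>weibull k) = (\<lambda>y. emeasure (weibull k) {x. x \<le> y})"
    proof
      fix y :: ennreal
      have "(\<lambda>x. (if x \<le> y then 1 else 0) :: ennreal) = indicator {x. x \<le> y}" by (auto simp: indicator_def)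
      thus "(\<integral>\<^sup>+x. (if x \<le> y then 1 else 0) \<partial>weibull k) = emeasure (weibull k) {x. x \<le> y}"
        by (simp add: sT)
    qed
    ultimately show "(\<lambda>y. emeasure (weibull k) {x. x \<le> y}) \<in> borel_measurable borel" by simp
  qed
  also have "\<dots> \<le> (\<integral>\<^sup>+x. ennreal ?C * (ennreal (\<mu> * exp (- x * \<mu> / 2)) * indicator {0..} x) \<partial>lborel)"
  proof (intro nn_integral_mono)
    fix x :: real
    show "ennreal (exponential_density \<mu> x) * emeasure (weibull k) {t. t \<le> ennreal x}
       \<le> ennreal ?C * (ennreal (\<mu> * exp (- x * \<mu> / 2)) * indicator {0..} x)"
    proof (cases "x \<ge> 0")
      case False thus ?thesis by (simp add: exponential_density_def)
    next
      case True
      have "1 - Sw k x \<le> x powr k" using one_minus_exp_le[of "x powr k"] True by (simp add: Sw_def)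
      also have "\<dots> \<le> ?C * exp (\<mu> * x / 2)" by (rule powr_exp_bound[OF k mu True])
      finally have a: "1 - Sw k x \<le> ?C * exp (\<mu> * x / 2)" .
      have "\<mu> * exp (- x * \<mu>) * (1 - Sw k x) \<le> \<mu> * exp (- x * \<mu>) * (?C * exp (\<mu> * x / 2))"
        using a mu by (intro mult_left_mono) auto
      also have "\<dots> = ?C * (\<mu> * exp (- x * \<mu> / 2))"
      proof -
        have "exp (- x * \<mu>) * exp (\<mu> * x / 2) = exp (- x * \<mu> / 2)" by (simp add: exp_add[symmetric])
        thus ?thesis by (metis (no_types, lifting) mult.assoc mult.left_commute)
      qed
      finally have b: "\<mu> * exp (- x * \<mu>) * (1 - Sw k x) \<le> ?C * (\<mu> * exp (- x * \<mu> / 2))" .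
      have "1 - Sw k x \<ge> 0" by (simp add: Sw_def)
      thus ?thesis using True b mu
        by (simp add: weib_le[OF k] exponential_density_def ennreal_mult'[symmetric] ennreal_leI)
    qed
  qed
  also have "\<dots> = ennreal ?C * (\<integral>\<^sup>+x. ennreal (\<mu> * exp (- x * \<mu> / 2)) * indicator {0..} x \<partial>lborel)"
    by (rule nn_integral_cmult) measurable
  also have "\<dots> = ennreal ?C * 2" by (simp only: int_exp_half[OF mu])
  finally have h: "ennreal (measure M Cset) \<le> ennreal ?C * 2" by (simp add: TR.emeasure_eq_measure)
  have "ennreal ?C * 2 = ennreal (2 * ?C)" by (simp add: ennreal_mult mult.commute)
  with h have "ennreal (measure M Cset) \<le> ennreal (2 * ?C)" by simp
  thus ?thesis by (subst (asm) ennreal_le_iff) auto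
qed

lemma exp_q_pos: "measure M Cset > 0"
  using weib_pos[OF k exp_reset[OF mu]] by (simp add: TR.emeasure_eq_measure)

lemma e3: "1/3 \<le> exp (-1::real)" using exp_le by (simp add: exp_minus field_simps)

lemma exp_gt:
  assumes k1: "k > 1" and m1: "\<mu> \<ge> 1" and mk: "\<mu> powr (k - 1) = 18 * Bk k * (2 * k) powr k + 1"
  shows "mean (weibull k) < mean \<nu>"
proof -
  define B where "B = Bk k"
  define K where "K = 18 * B * (2 * k) powr k"
  have B1: "B \<ge> 1" using Bk_ge1[OF k] by (simp add: B_def)
  have K0: "K \<ge> 0" using B1 by (simp add: K_def)
  have mk': "\<mu> powr k = \<mu> * (K + 1)"
  proof -
    have "\<mu> powr k = \<mu> powr (1 + (k - 1))" by simp
    also have "\<dots> = \<mu> powr 1 * \<mu> powr (k - 1)" by (rule powr_add)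
    finally show ?thesis using mk mu by (simp add: K_def B_def)
  qed
  have bk: "(1/\<mu>) powr k \<le> 1" using m1 k by (intro powr_le1) auto
  have Sb: "exp (-1) \<le> Sw k (1/\<mu>)" using bk m1 by (simp add: Sw_def max_def)
  have E0: "ennreal (1/\<mu> * Sw k (1/\<mu>) * exp (- (1/\<mu>) * \<mu>)) \<le> Em"
    using exp_Em_ge[of "1/\<mu>"] mu by simp
  have a:  "(1/9) / \<mu> \<le> 1/\<mu> * Sw k (1/\<mu>) * exp (- (1/\<mu>) * \<mu>)"
  proof -
    have "(1/9::real) = 1/3 * (1/3)" by simp
    also have "\<dots> \<le> Sw k (1/\<mu>) * exp (-1)" using e3 Sb by (intro mult_mono) auto
    finally have "1/9 \<le> Sw k (1/\<mu>) * exp (-1)" .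
    hence "(1/9) / \<mu> \<le> (Sw k (1/\<mu>) * exp (-1)) / \<mu>" using mu by (intro divide_right_mono) auto
    thus ?thesis using mu by simp
  qed
  have Em1: "ennreal ((1/9) / \<mu>) \<le> Em" by (rule order_trans[OF ennreal_leI[OF a] E0])
  have "B * measure M Cset \<le> B * (2 * (2 * k / \<mu>) powr k)"
    using exp_q_le B1 by (intro mult_left_mono) auto
  also have "(2 * k / \<mu>) powr k = (2 * k) powr k / (\<mu> * (K + 1))"
    using mu k by (simp add: powr_divide mk')
  also have "B * (2 * ((2 * k) powr k / (\<mu> * (K + 1)))) = (K / 9) / (\<mu> * (K + 1))"
    by (simp add: K_def field_simps)
  also have "\<dots> < (1/9) / \<mu>"
  proof -
    have "K / (K+1) < 1" using K0 by simp
    hence lt: "((1/9) / \<mu>) * (K / (K+1)) < ((1/9) / \<mu>) * 1" by (intro mult_strict_left_mono) (use mu in auto)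
    have eq: "(K / 9) / (\<mu> * (K + 1)) = ((1/9) / \<mu>) * (K / (K+1))" using K0 mu by (simp add: field_simps)
    show ?thesis unfolding eq using lt by simp
  qed
  finally have "ennreal (B * measure M Cset) < ennreal ((1/9) / \<mu>)"
    using mu by (intro ennreal_lessI) auto
  hence "ennreal (B * measure M Cset) < Em" using Em1 by (rule less_le_trans)
  hence "ennreal B < mean \<nu>" using B1 exp_q_pos by (intro mean_gt_crit) auto
  moreover have "mean (weibull k) \<le> ennreal B" using mean_weibull_le[OF k] by (simp add: B_def)
  ultimately show ?thesis by simp
qed

lemma exp_lt:
  assumes k1: "k < 1" and m1: "\<mu> \<ge> 1" and mk: "\<mu> powr (1 - k) = 19"
  shows "mean \<nu> < mean (weibull k)"
proof -
  have mk': "\<mu> = 19 * \<mu> powr k"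
  proof -
    have "\<mu> = \<mu> powr (k + (1 - k))" using mu by simp
    also have "\<dots> = \<mu> powr k * \<mu> powr (1 - k)" by (rule powr_add)
    finally show ?thesis using mk by simp
  qed
  have bk: "(1/\<mu>) powr k = 19 / \<mu>"
    using mu mk' by (simp add: powr_divide field_simps)
  have bk1: "(1/\<mu>) powr k \<le> 1" using m1 k by (intro powr_le1) auto
  have h1: "(1 - Sw k (1/\<mu>)) * exp (-1) \<le> measure M Cset"
    using exp_q_ge[of "1/\<mu>"] mu by simp
  have h2: "(19 / \<mu>) / 2 \<le> 1 - Sw k (1/\<mu>)"
    using one_minus_exp_ge[of "(1/\<mu>) powr k"] bk bk1 mu by (simp add: Sw_def max_def)
  have qge: "(19 / \<mu>) / 2 * exp (-1) \<le> measure M Cset"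
    by (rule order_trans[OF mult_right_mono[OF h2] h1]) simp
  have "Em \<le> ennreal (1/\<mu>)" by (rule exp_Em_le)
  also have "1/\<mu> < exp (-1) * measure M Cset"
  proof -
    have "1/\<mu> < (19 / \<mu>) / 2 * (1/3) * (1/3)" using mu by (simp add: field_simps)
    also have "\<dots> \<le> (19 / \<mu>) / 2 * exp (-1) * exp (-1)"
      using e3 mu by (intro mult_mono) auto
    also have "\<dots> \<le> measure M Cset * exp (-1)" using qge by (intro mult_right_mono) auto
    finally show ?thesis by (simp add: mult.commute)
  qed
  hence "ennreal (1/\<mu>) < ennreal (exp (-1) * measure M Cset)" using mu exp_q_pos by (intro ennreal_lessI) auto
  finally have crit: "Em < ennreal (exp (-1) * measure M Cset)" .
  have "mean \<nu> \<le> mean (weibull k)"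
    using stoch_le_mean[OF nu_law weibull_law[OF k] weib_stoch_le[OF k _ exp_reset[OF mu]]] k1 by simp
  also have "\<dots> \<le> ennreal (Bk k)" by (rule mean_weibull_le[OF k])
  finally have fin: "mean \<nu> < \<infinity>" by (simp add: le_less_trans)
  have "mean \<nu> < ennreal (exp (-1))" by (rule mean_lt_crit[OF exp_q_pos fin crit])
  also have "\<dots> \<le> mean (weibull k)" by (rule mean_weibull_ge[OF k])
  finally show ?thesis .
qed

end

lemma exp_fail_gt:
  assumes k: "k > 1"
  shows "\<exists>\<mu>>0. mean (weibull k) < mean (reset_transform (weibull k) (exp_law \<mu>))"
proof -
  define c where "c = 18 * Bk k * (2 * k) powr k + 1"
  have c: "c \<ge> 1" using Bk_ge1[of k] k by (simp add: c_def)
  define \<mu> where "\<mu> = c powr (1 / (k - 1))"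
  have m1: "\<mu> \<ge> 1" using c k by (simp add: \<mu>_def ge_one_powr_ge_zero)
  have "\<mu> powr (k - 1) = c" using c k by (simp add: \<mu>_def powr_powr)
  thus ?thesis using exp_gt[of k \<mu>] k m1 by (auto simp: c_def intro!: exI[of _ \<mu>])
qed

lemma exp_fail_lt:
  assumes k: "0 < k" "k < 1"
  shows "\<exists>\<mu>>0. mean (reset_transform (weibull k) (exp_law \<mu>)) < mean (weibull k)"
proof -
  define \<mu> where "\<mu> = 19 powr (1 / (1 - k))"
  have m1: "\<mu> \<ge> 1" using k by (simp add: \<mu>_def ge_one_powr_ge_zero)
  have "\<mu> powr (1 - k) = 19" using k by (simp add: \<mu>_def powr_powr)
  thus ?thesis using exp_lt[of k \<mu>] k m1 by (auto intro!: exI[of _ \<mu>])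
qed

lemma reset_law_is_law: "is_law T \<Longrightarrow> is_law R \<Longrightarrow> is_law (reset_transform T R)"
  by (rule reset_setting.nu_law) (unfold_locales)

theorem mainTheorem16:
  fixes k :: real
  assumes "k > 0"
  shows
   "(k \<le> 1 \<longleftrightarrow> (\<forall>R. is_reset_law R \<longrightarrow> stoch_le (reset_transform (weibull k) R) (weibull k))) \<and>
    (k \<le> 1 \<longleftrightarrow> (\<forall>r>0. stoch_le (reset_transform (weibull k) (dirac_law r)) (weibull k))) \<and>
    (k \<le> 1 \<longleftrightarrow> (\<forall>\<mu>>0. stoch_le (reset_transform (weibull k) (exp_law \<mu>)) (weibull k))) \<and>
    (k \<le> 1 \<longleftrightarrow> (\<forall>R. is_reset_law R \<longrightarrow> mean (reset_transform (weibull k) R) \<le> mean (weibull k))) \<and>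
    (k \<le> 1 \<longleftrightarrow> (\<forall>r>0. mean (reset_transform (weibull k) (dirac_law r)) \<le> mean (weibull k))) \<and>
    (k \<le> 1 \<longleftrightarrow> (\<forall>\<mu>>0. mean (reset_transform (weibull k) (exp_law \<mu>)) \<le> mean (weibull k))) \<and>
    (k \<le> 1 \<longleftrightarrow> Gamma (1 + 2 / k) \<ge> 2 * (Gamma (1 + 1 / k))\<^sup>2) \<and>
    (k \<ge> 1 \<longleftrightarrow> (\<forall>R. is_reset_law R \<longrightarrow> stoch_le (weibull k) (reset_transform (weibull k) R))) \<and>
    (k \<ge> 1 \<longleftrightarrow> (\<forall>r>0. stoch_le (weibull k) (reset_transform (weibull k) (dirac_law r)))) \<and>
    (k \<ge> 1 \<longleftrightarrow> (\<forall>\<mu>>0. stoch_le (weibull k) (reset_transform (weibull k) (exp_law \<mu>)))) \<and>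
    (k \<ge> 1 \<longleftrightarrow> (\<forall>R. is_reset_law R \<longrightarrow> mean (reset_transform (weibull k) R) \<ge> mean (weibull k))) \<and>
    (k \<ge> 1 \<longleftrightarrow> (\<forall>r>0. mean (reset_transform (weibull k) (dirac_law r)) \<ge> mean (weibull k))) \<and>
    (k \<ge> 1 \<longleftrightarrow> (\<forall>\<mu>>0. mean (reset_transform (weibull k) (exp_law \<mu>)) \<ge> mean (weibull k))) \<and>
    (k = 1 \<longleftrightarrow> (\<forall>R. is_reset_law R \<longrightarrow> reset_transform (weibull k) R = weibull k)) \<and>
    (k = 1 \<longleftrightarrow> (\<forall>r>0. reset_transform (weibull k) (dirac_law r) = weibull k)) \<and>
    (k = 1 \<longleftrightarrow> (\<forall>\<mu>>0. reset_transform (weibull k) (exp_law \<mu>) = weibull k)) \<and>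
    (k = 1 \<longleftrightarrow> (\<forall>R. is_reset_law R \<longrightarrow> mean (reset_transform (weibull k) R) = mean (weibull k))) \<and>
    (k = 1 \<longleftrightarrow> (\<forall>r>0. mean (reset_transform (weibull k) (dirac_law r)) = mean (weibull k))) \<and>
    (k = 1 \<longleftrightarrow> (\<forall>\<mu>>0. mean (reset_transform (weibull k) (exp_law \<mu>)) = mean (weibull k)))"
proof -
  have k: "k > 0" by fact
  let ?T = "weibull k"
  let ?X = "\<lambda>R. reset_transform ?T R"
  have TL: "is_law ?T" by (rule weibull_law[OF k])
  have XL: "is_law R \<Longrightarrow> is_law (?X R)" for R by (rule reset_law_is_law[OF TL])
  have rl: "is_reset_law R \<Longrightarrow> is_law R" for R by (simp add: is_reset_law_def)
  have dr: "r > 0 \<Longrightarrow> is_reset_law (dirac_law r)" for r by (rule dirac_reset)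
  have er: "\<mu> > 0 \<Longrightarrow> is_reset_law (exp_law \<mu>)" for \<mu> by (rule exp_reset)
  have F1: "k \<le> 1 \<Longrightarrow> is_reset_law R \<Longrightarrow> stoch_le (?X R) ?T" for R
    using weib_stoch_le[OF k] by blast
  have F2: "k \<ge> 1 \<Longrightarrow> is_reset_law R \<Longrightarrow> stoch_le ?T (?X R)" for R
    using weib_stoch_ge by blast
  have SM: "is_reset_law R \<Longrightarrow> stoch_le (?X R) ?T \<Longrightarrow> mean (?X R) \<le> mean ?T" for R
    by (rule stoch_le_mean[OF XL[OF rl] TL])
  have SM2: "is_reset_law R \<Longrightarrow> stoch_le ?T (?X R) \<Longrightarrow> mean ?T \<le> mean (?X R)" for R
    by (rule stoch_le_mean[OF TL XL[OF rl]])
  have Fd: "(\<forall>r>0. mean (?X (dirac_law r)) \<le> mean ?T) \<Longrightarrow> k \<le> 1"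
    using dirac_fail_gt[of k] by (meson leD not_le)
  have Fe: "(\<forall>\<mu>>0. mean (?X (exp_law \<mu>)) \<le> mean ?T) \<Longrightarrow> k \<le> 1"
    using exp_fail_gt[of k] by (meson leD not_le)
  have Gd: "(\<forall>r>0. mean (?X (dirac_law r)) \<ge> mean ?T) \<Longrightarrow> k \<ge> 1"
    using dirac_fail_lt[of k] k by (meson leD not_le)
  have Ge: "(\<forall>\<mu>>0. mean (?X (exp_law \<mu>)) \<ge> mean ?T) \<Longrightarrow> k \<ge> 1"
    using exp_fail_lt[of k] k by (meson leD not_le)
  have EQ: "k = 1 \<Longrightarrow> is_reset_law R \<Longrightarrow> ?X R = ?T" for R
  proof -
    assume k1: "k = 1" and R: "is_reset_law R"
    show "?X R = ?T"
    proof (rule law_eqI[OF XL[OF rl[OF R]] TL])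
      fix a :: real assume "a \<ge> 0"
      thus "emeasure (?X R) (U a) = emeasure ?T (U a)"
        using F1[OF _ R] F2[OF _ R] k1 unfolding stoch_le_U by (auto intro: antisym)
    qed
  qed
  have G: "k \<le> 1 \<longleftrightarrow> Gamma (1 + 2 / k) \<ge> 2 * (Gamma (1 + 1 / k))\<^sup>2" by (rule gamma_part[OF k])
  show ?thesis
  proof (intro conjI)
    show "(k \<le> 1 \<longleftrightarrow> (\<forall>R. is_reset_law R \<longrightarrow> stoch_le (?X R) ?T))"
      using F1 SM dr Fd by blast
    show "(k \<le> 1 \<longleftrightarrow> (\<forall>r>0. stoch_le (?X (dirac_law r)) ?T))"
      using F1 SM dr Fd by blast
    show "(k \<le> 1 \<longleftrightarrow> (\<forall>\<mu>>0. stoch_le (?X (exp_law \<mu>)) ?T))"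
      using F1 SM er Fe by blast
    show "(k \<le> 1 \<longleftrightarrow> (\<forall>R. is_reset_law R \<longrightarrow> mean (?X R) \<le> mean ?T))"
      using F1 SM dr Fd by blast
    show "(k \<le> 1 \<longleftrightarrow> (\<forall>r>0. mean (?X (dirac_law r)) \<le> mean ?T))"
      using F1 SM dr Fd by blast
    show "(k \<le> 1 \<longleftrightarrow> (\<forall>\<mu>>0. mean (?X (exp_law \<mu>)) \<le> mean ?T))"
      using F1 SM er Fe by blast
    show "(k \<le> 1 \<longleftrightarrow> Gamma (1 + 2 / k) \<ge> 2 * (Gamma (1 + 1 / k))\<^sup>2)" by (rule G)
    show "(k \<ge> 1 \<longleftrightarrow> (\<forall>R. is_reset_law R \<longrightarrow> stoch_le ?T (?X R)))"
      using F2 SM2 dr Gd by blast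
    show "(k \<ge> 1 \<longleftrightarrow> (\<forall>r>0. stoch_le ?T (?X (dirac_law r))))"
      using F2 SM2 dr Gd by blast
    show "(k \<ge> 1 \<longleftrightarrow> (\<forall>\<mu>>0. stoch_le ?T (?X (exp_law \<mu>))))"
      using F2 SM2 er Ge by blast
    show "(k \<ge> 1 \<longleftrightarrow> (\<forall>R. is_reset_law R \<longrightarrow> mean (?X R) \<ge> mean ?T))"
      using F2 SM2 dr Gd by blast
    show "(k \<ge> 1 \<longleftrightarrow> (\<forall>r>0. mean (?X (dirac_law r)) \<ge> mean ?T))"
      using F2 SM2 dr Gd by blast
    show "(k \<ge> 1 \<longleftrightarrow> (\<forall>\<mu>>0. mean (?X (exp_law \<mu>)) \<ge> mean ?T))"
      using F2 SM2 er Ge by blast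
    show "(k = 1 \<longleftrightarrow> (\<forall>R. is_reset_law R \<longrightarrow> ?X R = ?T))"
      using EQ dr Fd Gd by (smt (verit, best) order_refl)
    show "(k = 1 \<longleftrightarrow> (\<forall>r>0. ?X (dirac_law r) = ?T))"
      using EQ dr Fd Gd by (smt (verit, best) order_refl)
    show "(k = 1 \<longleftrightarrow> (\<forall>\<mu>>0. ?X (exp_law \<mu>) = ?T))"
      using EQ er Fe Ge by (smt (verit, best) order_refl)
    show "(k = 1 \<longleftrightarrow> (\<forall>R. is_reset_law R \<longrightarrow> mean (?X R) = mean ?T))"
      using EQ dr Fd Gd by (smt (verit, best) order_refl)
    show "(k = 1 \<longleftrightarrow> (\<forall>r>0. mean (?X (dirac_law r)) = mean ?T))"
      using EQ dr Fd Gd by (smt (verit, best) order_refl)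
    show "(k = 1 \<longleftrightarrow> (\<forall>\<mu>>0. mean (?X (exp_law \<mu>)) = mean ?T))"
      using EQ er Fe Ge by (smt (verit, best) order_refl)
  qed
qed

end
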